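(* Let $I$ be a countable index set and $(M_i)_{i\in I}$ countable $L$-structures, and let $M=\prod_{i\in I}M_i$, viewed as a two-sorted structure in the Feferman–Vaught language: one sort is the product $\prod_i M_i$, the other is the Boolean algebra $\mathcal P(I)$ with its Boolean operations, and for each $L$-formula $\phi(x_1,\dots,x_n)$ there is a function $[\phi]:(\prod_i M_i)^n\to\mathcal P(I)$ with $[\phi](a_1,\dots,a_n)=\{i\in I: M_i\models\phi(a_1(i),\dots,a_n(i))\}$. Equip $\prod_i M_i$ with the product topology of the discrete spaces $M_i$ (a Polish space). Then every equivalence relation on $(\prod_i M_i)^n$ that is definable without parameters in this structure is smooth.
   Context: An equivalence relation $E$ on a standard Borel space $Z$ is smooth if there is a Borel map $\theta$ from $Z$ into a Polish space with $x\,E\,y\iff\theta(x)=\theta(y)$. *)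

theory Defs
  imports "HOL-Analysis.Analysis"
begin

definition Polish_space :: "'a topology \<Rightarrow> bool" where
  "Polish_space X \<longleftrightarrow> completely_metrizable_space X \<and> separable_space X"

definition borel_of :: "'a topology \<Rightarrow> 'a measure" where
  "borel_of X = sigma (topspace X) {U. openin X U}"

text \<open>The Polish target
  space is taken to live on the type real; since every Polish space has cardinality at
  most the continuum it can be transported onto a subset of real, so this is no loss.\<close>
definition smooth_rel :: "'a topology \<Rightarrow> ('a \<times> 'a) set \<Rightarrow> bool" where
  "smooth_rel X E \<longleftrightarrow>
     (\<exists>(Y :: real topology) \<theta>. Polish_space Y \<and>
        \<theta> \<in> borel_of X \<rightarrow>\<^sub>M borel_of Y \<and>
        (\<forall>x\<in>topspace X. \<forall>y\<in>topspace X. (x, y) \<in> E \<longleftrightarrow> \<theta> x = \<theta> y))"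

datatype 'f trm = Var nat | Fn 'f "'f trm list"

datatype ('f, 'r) fm =
    Falsum
  | Equal "'f trm" "'f trm"
  | Rel 'r "'f trm list"
  | Neg "('f, 'r) fm"
  | Conj "('f, 'r) fm" "('f, 'r) fm"
  | Exi nat "('f, 'r) fm"

record ('f, 'r, 'a) lstruct =
  dom :: "'a set"
  fun_int :: "'f \<Rightarrow> 'a list \<Rightarrow> 'a"
  rel_int :: "'r \<Rightarrow> 'a list \<Rightarrow> bool"

definition is_lstruct :: "('f, 'r, 'a) lstruct \<Rightarrow> bool" where
  "is_lstruct M \<longleftrightarrow> dom M \<noteq> {} \<and>
     (\<forall>f xs. set xs \<subseteq> dom M \<longrightarrow> fun_int M f xs \<in> dom M)"

fun evalt :: "('f, 'r, 'a) lstruct \<Rightarrow> (nat \<Rightarrow> 'a) \<Rightarrow> 'f trm \<Rightarrow> 'a" where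
  "evalt M e (Var k) = e k"
| "evalt M e (Fn f ts) = fun_int M f (map (evalt M e) ts)"

fun lsat :: "('f, 'r, 'a) lstruct \<Rightarrow> (nat \<Rightarrow> 'a) \<Rightarrow> ('f, 'r) fm \<Rightarrow> bool" where
  "lsat M e Falsum = False"
| "lsat M e (Equal s t) = (evalt M e s = evalt M e t)"
| "lsat M e (Rel r ts) = rel_int M r (map (evalt M e) ts)"
| "lsat M e (Neg \<phi>) = (\<not> lsat M e \<phi>)"
| "lsat M e (Conj \<phi> \<psi>) = (lsat M e \<phi> \<and> lsat M e \<psi>)"
| "lsat M e (Exi k \<phi>) = (\<exists>x\<in>dom M. lsat M (e(k := x)) \<phi>)"

fun fvt :: "'f trm \<Rightarrow> nat set" where
  "fvt (Var k) = {k}"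
| "fvt (Fn f ts) = (\<Union>t\<in>set ts. fvt t)"

fun fv :: "('f, 'r) fm \<Rightarrow> nat set" where
  "fv Falsum = {}"
| "fv (Equal s t) = fvt s \<union> fvt t"
| "fv (Rel r ts) = (\<Union>t\<in>set ts. fvt t)"
| "fv (Neg \<phi>) = fv \<phi>"
| "fv (Conj \<phi> \<psi>) = fv \<phi> \<union> fv \<psi>"
| "fv (Exi k \<phi>) = fv \<phi> - {k}"

text \<open>Sort P (the product) has only variables; sort B (the Boolean algebra P(I)) has
  variables, the Boolean operations, and the function symbols [phi] applied to P-variables.\<close>
datatype ('f, 'r) bterm =
    BVar nat
  | BZero
  | BOne
  | BUn "('f, 'r) bterm" "('f, 'r) bterm"
  | BInt "('f, 'r) bterm" "('f, 'r) bterm"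
  | BCompl "('f, 'r) bterm"
  | Br "('f, 'r) fm" "nat list"

datatype ('f, 'r) fvfm =
    FFalse
  | PEq nat nat
  | BEq "('f, 'r) bterm" "('f, 'r) bterm"
  | FNeg "('f, 'r) fvfm"
  | FConj "('f, 'r) fvfm" "('f, 'r) fvfm"
  | PEx nat "('f, 'r) fvfm"
  | BEx nat "('f, 'r) fvfm"

text \<open>The product carrier, with index set I = UNIV :: 'i set.\<close>
definition prod_carrier :: "('i \<Rightarrow> ('f, 'r, 'a) lstruct) \<Rightarrow> ('i \<Rightarrow> 'a) set" where
  "prod_carrier M = (\<Pi>\<^sub>E i\<in>UNIV. dom (M i))"

text \<open>Evaluation of B-terms; [phi](a_1,...,a_n) = {i. M_i |= phi(a_1(i),...,a_n(i))},
  where the k-th variable of phi is interpreted by the k-th argument.\<close>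
fun bval :: "('i \<Rightarrow> ('f, 'r, 'a) lstruct) \<Rightarrow> (nat \<Rightarrow> 'i \<Rightarrow> 'a) \<Rightarrow> (nat \<Rightarrow> 'i set)
              \<Rightarrow> ('f, 'r) bterm \<Rightarrow> 'i set" where
  "bval M \<sigma> \<beta> (BVar k) = \<beta> k"
| "bval M \<sigma> \<beta> BZero = {}"
| "bval M \<sigma> \<beta> BOne = UNIV"
| "bval M \<sigma> \<beta> (BUn s t) = bval M \<sigma> \<beta> s \<union> bval M \<sigma> \<beta> t"
| "bval M \<sigma> \<beta> (BInt s t) = bval M \<sigma> \<beta> s \<inter> bval M \<sigma> \<beta> t"
| "bval M \<sigma> \<beta> (BCompl s) = - bval M \<sigma> \<beta> s"
| "bval M \<sigma> \<beta> (Br \<phi> vs) =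
     {i. lsat (M i) (\<lambda>k. if k < length vs then \<sigma> (vs ! k) i else undefined) \<phi>}"

fun fvsat :: "('i \<Rightarrow> ('f, 'r, 'a) lstruct) \<Rightarrow> (nat \<Rightarrow> 'i \<Rightarrow> 'a) \<Rightarrow> (nat \<Rightarrow> 'i set)
              \<Rightarrow> ('f, 'r) fvfm \<Rightarrow> bool" where
  "fvsat M \<sigma> \<beta> FFalse = False"
| "fvsat M \<sigma> \<beta> (PEq j k) = (\<sigma> j = \<sigma> k)"
| "fvsat M \<sigma> \<beta> (BEq s t) = (bval M \<sigma> \<beta> s = bval M \<sigma> \<beta> t)"
| "fvsat M \<sigma> \<beta> (FNeg \<psi>) = (\<not> fvsat M \<sigma> \<beta> \<psi>)"
| "fvsat M \<sigma> \<beta> (FConj \<psi> \<xi>) = (fvsat M \<sigma> \<beta> \<psi> \<and> fvsat M \<sigma> \<beta> \<xi>)"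
| "fvsat M \<sigma> \<beta> (PEx k \<psi>) = (\<exists>a\<in>prod_carrier M. fvsat M (\<sigma>(k := a)) \<beta> \<psi>)"
| "fvsat M \<sigma> \<beta> (BEx k \<psi>) = (\<exists>S. fvsat M \<sigma> (\<beta>(k := S)) \<psi>)"

fun wf_bterm :: "('f, 'r) bterm \<Rightarrow> bool" where
  "wf_bterm (BUn s t) = (wf_bterm s \<and> wf_bterm t)"
| "wf_bterm (BInt s t) = (wf_bterm s \<and> wf_bterm t)"
| "wf_bterm (BCompl s) = wf_bterm s"
| "wf_bterm (Br \<phi> vs) = (fv \<phi> \<subseteq> {..<length vs})"
| "wf_bterm _ = True"

fun wf_fvfm :: "('f, 'r) fvfm \<Rightarrow> bool" where
  "wf_fvfm (BEq s t) = (wf_bterm s \<and> wf_bterm t)"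
| "wf_fvfm (FNeg \<psi>) = wf_fvfm \<psi>"
| "wf_fvfm (FConj \<psi> \<xi>) = (wf_fvfm \<psi> \<and> wf_fvfm \<xi>)"
| "wf_fvfm (PEx k \<psi>) = wf_fvfm \<psi>"
| "wf_fvfm (BEx k \<psi>) = wf_fvfm \<psi>"
| "wf_fvfm _ = True"

fun pfv_bterm :: "('f, 'r) bterm \<Rightarrow> nat set" where
  "pfv_bterm (BUn s t) = pfv_bterm s \<union> pfv_bterm t"
| "pfv_bterm (BInt s t) = pfv_bterm s \<union> pfv_bterm t"
| "pfv_bterm (BCompl s) = pfv_bterm s"
| "pfv_bterm (Br \<phi> vs) = set vs"
| "pfv_bterm _ = {}"

fun bfv_bterm :: "('f, 'r) bterm \<Rightarrow> nat set" where
  "bfv_bterm (BVar k) = {k}"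
| "bfv_bterm (BUn s t) = bfv_bterm s \<union> bfv_bterm t"
| "bfv_bterm (BInt s t) = bfv_bterm s \<union> bfv_bterm t"
| "bfv_bterm (BCompl s) = bfv_bterm s"
| "bfv_bterm _ = {}"

fun pfv :: "('f, 'r) fvfm \<Rightarrow> nat set" where
  "pfv FFalse = {}"
| "pfv (PEq j k) = {j, k}"
| "pfv (BEq s t) = pfv_bterm s \<union> pfv_bterm t"
| "pfv (FNeg \<psi>) = pfv \<psi>"
| "pfv (FConj \<psi> \<xi>) = pfv \<psi> \<union> pfv \<xi>"
| "pfv (PEx k \<psi>) = pfv \<psi> - {k}"
| "pfv (BEx k \<psi>) = pfv \<psi>"

fun bfv :: "('f, 'r) fvfm \<Rightarrow> nat set" where
  "bfv FFalse = {}"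
| "bfv (PEq j k) = {}"
| "bfv (BEq s t) = bfv_bterm s \<union> bfv_bterm t"
| "bfv (FNeg \<psi>) = bfv \<psi>"
| "bfv (FConj \<psi> \<xi>) = bfv \<psi> \<union> bfv \<xi>"
| "bfv (PEx k \<psi>) = bfv \<psi>"
| "bfv (BEx k \<psi>) = bfv \<psi> - {k}"

definition tuples :: "('i \<Rightarrow> ('f, 'r, 'a) lstruct) \<Rightarrow> nat \<Rightarrow> (nat \<Rightarrow> 'i \<Rightarrow> 'a) set" where
  "tuples M n = (\<Pi>\<^sub>E k\<in>{..<n}. prod_carrier M)"

text \<open>The binary relation on n-tuples defined by psi, where the P-variables 0..n-1 stand
  for the first tuple and n..2n-1 for the second.  (For a parameter-free psi whose free
  variables are among these, the B-variable assignment is irrelevant.)\<close>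
definition defined_rel ::
  "('i \<Rightarrow> ('f, 'r, 'a) lstruct) \<Rightarrow> nat \<Rightarrow> ('f, 'r) fvfm
     \<Rightarrow> ((nat \<Rightarrow> 'i \<Rightarrow> 'a) \<times> (nat \<Rightarrow> 'i \<Rightarrow> 'a)) set" where
  "defined_rel M n \<psi> =
     {(a, b). a \<in> tuples M n \<and> b \<in> tuples M n \<and>
        fvsat M (\<lambda>k. if k < n then a k else b (k - n)) (\<lambda>_. {}) \<psi>}"

definition FV_definable_rel ::
  "('i \<Rightarrow> ('f, 'r, 'a) lstruct) \<Rightarrow> nat
     \<Rightarrow> ((nat \<Rightarrow> 'i \<Rightarrow> 'a) \<times> (nat \<Rightarrow> 'i \<Rightarrow> 'a)) set \<Rightarrow> bool" where
  "FV_definable_rel M n E \<longleftrightarrow>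
     (\<exists>\<psi>. wf_fvfm \<psi> \<and> pfv \<psi> \<subseteq> {..<2 * n} \<and> bfv \<psi> = {} \<and> E = defined_rel M n \<psi>)"

definition prod_top :: "('i \<Rightarrow> ('f, 'r, 'a) lstruct) \<Rightarrow> ('i \<Rightarrow> 'a) topology" where
  "prod_top M = product_topology (\<lambda>i. discrete_topology (dom (M i))) UNIV"

definition tuple_top :: "('i \<Rightarrow> ('f, 'r, 'a) lstruct) \<Rightarrow> nat \<Rightarrow> (nat \<Rightarrow> 'i \<Rightarrow> 'a) topology" where
  "tuple_top M n = product_topology (\<lambda>_. prod_top M) {..<n}"

end

theory Submission
  imports Defs "HOL-Library.Nat_Bijection"
begin



definition tr :: "nat \<Rightarrow> 'x set \<Rightarrow> nat" where
  "tr K S = (if finite S then min K (card S) else K)"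

lemma tr_le: "tr K S \<le> K" by (simp add: tr_def)

lemma tr_min: "K1 \<le> K \<Longrightarrow> tr K1 S = min K1 (tr K S)"
  by (auto simp: tr_def)

lemma tr_mono_K: "K1 \<le> K \<Longrightarrow> tr K A = tr K B \<Longrightarrow> tr K1 A = tr K1 B"
  by (metis tr_min)

lemma tr_empty[simp]: "tr K {} = 0" by (simp add: tr_def)

lemma tr1_zero: "tr (Suc 0) S = 0 \<longleftrightarrow> S = {}"
proof
  assume "tr (Suc 0) S = 0"
  then have f: "finite S" and m: "min (Suc 0) (card S) = 0" by (auto simp: tr_def split: if_splits)
  from m have "card S = 0" by linarith
  then show "S = {}" using f by simp
qed simp

lemma tr_union: "A \<inter> B = {} \<Longrightarrow> tr K (A \<union> B) = min K (tr K A + tr K B)"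
  by (auto simp: tr_def card_Un_disjoint)

lemma tr_Union_finite:
  assumes "finite D" "disjoint_family_on X D" "disjoint_family_on Y D"
    "\<And>d. d \<in> D \<Longrightarrow> tr K (X d) = tr K (Y d)"
  shows "tr K (\<Union>d\<in>D. X d) = tr K (\<Union>d\<in>D. Y d)"
  using assms
proof (induction D rule: finite_induct)
  case empty then show ?case by simp
next
  case (insert d D)
  have dX: "X d \<inter> (\<Union>e\<in>D. X e) = {}" using insert(2,4) unfolding disjoint_family_on_def by fastforce
  have dY: "Y d \<inter> (\<Union>e\<in>D. Y e) = {}" using insert(2,5) unfolding disjoint_family_on_def by fastforce
  have IH: "tr K (\<Union>d\<in>D. X d) = tr K (\<Union>d\<in>D. Y d)"
    using insert by (auto simp: disjoint_family_on_def)
  show ?case using tr_union[OF dX] tr_union[OF dY] IH insert(6) by simp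
qed

lemma ex_subset_card:
  assumes "infinite P \<or> j \<le> card P"
  shows "\<exists>B\<subseteq>P. finite B \<and> card B = j"
  using assms
proof
  assume "infinite P" then show ?thesis
    using infinite_arbitrarily_large by blast
next
  assume a: "j \<le> card P"
  show ?thesis
  proof (cases "finite P")
    case True then show ?thesis using obtain_subset_with_card_n[OF a] by (metis finite_subset)
  next
    case False then show ?thesis using infinite_arbitrarily_large by blast
  qed
qed

lemma tr_eq_K: "tr K S = K \<longleftrightarrow> infinite S \<or> K \<le> card S"
  by (auto simp: tr_def)

lemma tr_lt: "tr K S < K \<longleftrightarrow> finite S \<and> card S < K"
  by (auto simp: tr_def)

lemma big_diff:
  assumes "infinite P \<or> m + card B \<le> card P" "finite B" "B \<subseteq> P"
  shows "infinite (P - B) \<or> m \<le> card (P - B)"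
proof (cases "finite P")
  case True
  then have "card (P - B) = card P - card B" using assms card_Diff_subset by blast
  then show ?thesis using assms True by auto
next
  case False then show ?thesis using assms(2) by (simp add: Diff_infinite_finite)
qed

lemma split_lemma:
  assumes eq: "tr (K + L) P = tr (K + L) P'" and AP: "A \<subseteq> P"
  shows "\<exists>A'\<subseteq>P'. tr K A' = tr K A \<and> tr L (P' - A') = tr L (P - A)"
proof (cases "finite P \<and> card P < K + L")
  case True
  then have tP: "tr (K+L) P = card P" by (simp add: tr_def)
  then have "tr (K+L) P' < K + L" using eq True by simp
  then have fP': "finite P' \<and> card P' = card P" using eq tP by (simp add: tr_def split: if_splits)
  have fA: "finite A" using True AP finite_subset by blast
  have "card A \<le> card P" using True AP card_mono by blast
  then obtain A' where A': "A' \<subseteq> P'" "card A' = card A" "finite A'"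
    using ex_subset_card[of P' "card A"] fP' by auto
  have "card (P' - A') = card (P - A)"
    using A' fP' AP True fA by (simp add: card_Diff_subset)
  then show ?thesis using A' fA fP' True by (intro exI[of _ A']) (auto simp: tr_def)
next
  case False
  then have bigP: "infinite P \<or> K + L \<le> card P" by auto
  then have "tr (K+L) P = K + L" by (simp add: tr_eq_K)
  then have bigP': "infinite P' \<or> K + L \<le> card P'" using eq tr_eq_K by metis
  show ?thesis
  proof (cases "finite A \<and> card A < K")
    case True
    obtain A' where A': "A' \<subseteq> P'" "finite A'" "card A' = card A"
      using ex_subset_card[of P' "card A"] bigP' True by auto
    have "infinite (P' - A') \<or> L \<le> card (P' - A')"
      using big_diff[of P' L A'] bigP' A' True by auto
    moreover have "infinite (P - A) \<or> L \<le> card (P - A)"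
      using big_diff[of P L A] bigP AP True by auto
    ultimately show ?thesis using A' True
      by (intro exI[of _ A']) (auto simp: tr_def)
  next
    case False
    then have bigA: "infinite A \<or> K \<le> card A" by auto
    show ?thesis
    proof (cases "finite (P - A) \<and> card (P - A) < L")
      case True
      obtain B' where B': "B' \<subseteq> P'" "finite B'" "card B' = card (P - A)"
        using ex_subset_card[of P' "card (P - A)"] bigP' True by auto
      have PB: "P' - (P' - B') = B'" using B' by auto
      have "infinite (P' - B') \<or> K \<le> card (P' - B')"
        using big_diff[of P' K B'] bigP' B' True by auto
      then show ?thesis using B' True bigA PB
        by (intro exI[of _ "P' - B'"]) (auto simp: tr_def)
    next
      case False
      obtain A' where A': "A' \<subseteq> P'" "finite A'" "card A' = K"
        using ex_subset_card[of P' K] bigP' by auto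
      have "infinite (P' - A') \<or> L \<le> card (P' - A')"
        using big_diff[of P' L A'] bigP' A' by auto
      then show ?thesis using A' False bigA
        by (intro exI[of _ A']) (auto simp: tr_def)
    qed
  qed
qed




lemma multi_split:
  assumes "distinct cs" "cs \<noteq> []" "tr (K * length cs) P = tr (K * length cs) P'" "f ` P \<subseteq> set cs"
  shows "\<exists>f'. f' ` P' \<subseteq> set cs \<and> (\<forall>c. tr K {i\<in>P'. f' i = c} = tr K {i\<in>P. f i = c})"
  using assms
proof (induction cs arbitrary: P P' f)
  case Nil then show ?case by simp
next
  case (Cons c cs)
  show ?case
  proof (cases "cs = []")
    case True
    then have fc: "\<And>i. i \<in> P \<Longrightarrow> f i = c" using Cons.prems by auto
    have "tr K P' = tr K P" using Cons.prems True by simp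
    moreover have "{i\<in>P. f i = c} = P" using fc by auto
    moreover have e: "\<And>c'. c' \<noteq> c \<Longrightarrow> {i\<in>P. f i = c'} = {}" using fc by auto
    ultimately have "tr K {i\<in>P'. (\<lambda>_. c) i = c'} = tr K {i\<in>P. f i = c'}" for c'
      by (cases "c' = c") (simp_all add: e)
    then show ?thesis using True
      by (intro exI[of _ "\<lambda>_. c"]) auto
  next
    case False
    define A where "A = {i\<in>P. f i = c}"
    have eq: "tr (K + K * length cs) P = tr (K + K * length cs) P'"
      using Cons.prems by simp
    obtain A' where A': "A' \<subseteq> P'" "tr K A' = tr K A" "tr (K * length cs) (P' - A') = tr (K * length cs) (P - A)"
      using split_lemma[OF eq, of A] unfolding A_def by auto
    have cnot: "c \<notin> set cs" using Cons.prems by simp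
    have "f ` (P - A) \<subseteq> set cs" using Cons.prems unfolding A_def by auto
    then obtain g where g: "g ` (P' - A') \<subseteq> set cs"
      "\<forall>c. tr K {i\<in>P' - A'. g i = c} = tr K {i\<in>P - A. f i = c}"
      using Cons.IH[of "P - A" "P' - A'" f] Cons.prems False A'(3) by auto
    define f' where "f' i = (if i \<in> A' then c else g i)" for i
    have "f' ` P' \<subseteq> set (c # cs)" using g(1) unfolding f'_def by auto
    moreover have "tr K {i\<in>P'. f' i = c'} = tr K {i\<in>P. f i = c'}" for c'
    proof (cases "c' = c")
      case True
      have "{i\<in>P'. f' i = c'} = A'" using A'(1) g(1) cnot True unfolding f'_def by auto
      moreover have "{i\<in>P. f i = c'} = A" using True unfolding A_def by auto
      ultimately show ?thesis using A'(2) by simp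
    next
      case False
      have "{i\<in>P'. f' i = c'} = {i\<in>P' - A'. g i = c'}" using False unfolding f'_def by auto
      moreover have "{i\<in>P. f i = c'} = {i\<in>P - A. f i = c'}" using False unfolding A_def by auto
      ultimately show ?thesis using g(2) by simp
    qed
    ultimately show ?thesis by blast
  qed
qed

definition cset :: "('i \<Rightarrow> (nat \<Rightarrow> 'a) \<Rightarrow> (nat \<Rightarrow> bool) \<Rightarrow> nat) \<Rightarrow> (nat \<Rightarrow> 'i \<Rightarrow> 'a) \<Rightarrow> (nat \<Rightarrow> 'i set) \<Rightarrow> nat \<Rightarrow> 'i set" where
  "cset T \<sigma> \<beta> c = {i. T i (\<lambda>v. \<sigma> v i) (\<lambda>b. i \<in> \<beta> b) = c}"

definition rng :: "('i \<Rightarrow> (nat \<Rightarrow> 'a) \<Rightarrow> (nat \<Rightarrow> bool) \<Rightarrow> nat) \<Rightarrow> nat set" where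
  "rng T = {T i \<rho> \<omega> | i \<rho> \<omega>. True}"

definition sameK where
  "sameK T K \<sigma> \<beta> \<sigma>' \<beta>' \<longleftrightarrow> (\<forall>c. tr K (cset T \<sigma> \<beta> c) = tr K (cset T \<sigma>' \<beta>' c))"

definition det :: "((nat \<Rightarrow> 'i \<Rightarrow> 'a) \<Rightarrow> (nat \<Rightarrow> 'i set) \<Rightarrow> bool) \<Rightarrow> bool" where
  "det Q \<longleftrightarrow> (\<exists>T K. finite (rng T) \<and> (\<forall>\<sigma> \<beta> \<sigma>' \<beta>'. sameK T K \<sigma> \<beta> \<sigma>' \<beta>' \<longrightarrow> Q \<sigma> \<beta> = Q \<sigma>' \<beta>'))"

lemma rngI: "T i \<rho> \<omega> \<in> rng T" unfolding rng_def by blast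

lemma cset_disj: "c \<noteq> d \<Longrightarrow> cset T \<sigma> \<beta> c \<inter> cset T \<sigma> \<beta> d = {}"
  unfolding cset_def by auto

lemma det_eq: "det Q \<Longrightarrow> (\<And>\<sigma> \<beta>. Q \<sigma> \<beta> = Q' \<sigma> \<beta>) \<Longrightarrow> det Q'"
proof -
  assume "det Q" "\<And>\<sigma> \<beta>. Q \<sigma> \<beta> = Q' \<sigma> \<beta>"
  then have "Q = Q'" by (auto simp: fun_eq_iff)
  with \<open>det Q\<close> show ?thesis by simp
qed

lemma det_atom: "det (\<lambda>\<sigma> \<beta>. \<forall>i. P i (\<lambda>v. \<sigma> v i) (\<lambda>b. i \<in> \<beta> b))"
proof -
  define T where "T i \<rho> \<omega> = (if P i \<rho> \<omega> then 0 else (1::nat))" for i \<rho> \<omega>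
  have "rng T \<subseteq> {0, 1}" unfolding rng_def T_def by auto
  then have fin: "finite (rng T)" using finite_subset by blast
  have key: "(\<forall>i. P i (\<lambda>v. \<sigma> v i) (\<lambda>b. i \<in> \<beta> b)) \<longleftrightarrow> tr (Suc 0) (cset T \<sigma> \<beta> 1) = 0" for \<sigma> \<beta>
    unfolding tr1_zero cset_def T_def by auto
  show ?thesis unfolding det_def sameK_def
    by (rule exI[of _ T], rule exI[of _ "Suc 0"]) (use fin key in metis)
qed

lemma det_not: "det Q \<Longrightarrow> det (\<lambda>\<sigma> \<beta>. \<not> Q \<sigma> \<beta>)"
  unfolding det_def by metis

lemma det_conj:
  assumes "det Q1" "det Q2"
  shows "det (\<lambda>\<sigma> \<beta>. Q1 \<sigma> \<beta> \<and> Q2 \<sigma> \<beta>)"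
proof -
  obtain T1 K1 where T1: "finite (rng T1)" "\<And>\<sigma> \<beta> \<sigma>' \<beta>'. sameK T1 K1 \<sigma> \<beta> \<sigma>' \<beta>' \<Longrightarrow> Q1 \<sigma> \<beta> = Q1 \<sigma>' \<beta>'"
    using assms(1) unfolding det_def by blast
  obtain T2 K2 where T2: "finite (rng T2)" "\<And>\<sigma> \<beta> \<sigma>' \<beta>'. sameK T2 K2 \<sigma> \<beta> \<sigma>' \<beta>' \<Longrightarrow> Q2 \<sigma> \<beta> = Q2 \<sigma>' \<beta>'"
    using assms(2) unfolding det_def by blast
  define T where "T i \<rho> \<omega> = prod_encode (T1 i \<rho> \<omega>, T2 i \<rho> \<omega>)" for i \<rho> \<omega>
  define K where "K = max K1 K2"
  have "rng T \<subseteq> prod_encode ` (rng T1 \<times> rng T2)" unfolding rng_def T_def by auto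
  then have fin: "finite (rng T)" using T1(1) T2(1) finite_subset by blast
  have dec1: "cset T1 \<sigma> \<beta> c1 = (\<Union>c2\<in>rng T2. cset T \<sigma> \<beta> (prod_encode (c1, c2)))" for \<sigma> \<beta> c1
    unfolding cset_def T_def by (auto intro: rngI)
  have dec2: "cset T2 \<sigma> \<beta> c2 = (\<Union>c1\<in>rng T1. cset T \<sigma> \<beta> (prod_encode (c1, c2)))" for \<sigma> \<beta> c2
    unfolding cset_def T_def by (auto intro: rngI)
  have disj1: "disjoint_family_on (\<lambda>c2. cset T \<sigma> \<beta> (prod_encode (c1, c2))) D" for \<sigma> \<beta> c1 D
    unfolding disjoint_family_on_def using cset_disj by (metis prod_encode_eq prod.inject)
  have disj2: "disjoint_family_on (\<lambda>c1. cset T \<sigma> \<beta> (prod_encode (c1, c2))) D" for \<sigma> \<beta> c2 D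
    unfolding disjoint_family_on_def using cset_disj by (metis prod_encode_eq prod.inject)
  have "Q1 \<sigma> \<beta> \<and> Q2 \<sigma> \<beta> \<longleftrightarrow> Q1 \<sigma>' \<beta>' \<and> Q2 \<sigma>' \<beta>'" if s: "sameK T K \<sigma> \<beta> \<sigma>' \<beta>'" for \<sigma> \<beta> \<sigma>' \<beta>'
  proof -
    have "sameK T1 K1 \<sigma> \<beta> \<sigma>' \<beta>'"
      unfolding sameK_def dec1
      by (intro allI tr_Union_finite T2(1) disj1) (use s in \<open>auto simp: sameK_def K_def intro: tr_mono_K[of K1 "max K1 K2"]\<close>)
    moreover have "sameK T2 K2 \<sigma> \<beta> \<sigma>' \<beta>'"
      unfolding sameK_def dec2
      by (intro allI tr_Union_finite T1(1) disj2) (use s in \<open>auto simp: sameK_def K_def intro: tr_mono_K[of K2 "max K1 K2"]\<close>)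
    ultimately show ?thesis using T1(2) T2(2) by blast
  qed
  then show ?thesis unfolding det_def using fin by blast
qed

lemma det_subst:
  assumes "det Q"
  shows "det (\<lambda>\<sigma> \<beta>. Q (\<lambda>v i. G v i (\<lambda>w. \<sigma> w i)) (\<lambda>b. {i. H b i (\<lambda>c. i \<in> \<beta> c)}))"
proof -
  obtain T K where T: "finite (rng T)" "\<And>\<sigma> \<beta> \<sigma>' \<beta>'. sameK T K \<sigma> \<beta> \<sigma>' \<beta>' \<Longrightarrow> Q \<sigma> \<beta> = Q \<sigma>' \<beta>'"
    using assms unfolding det_def by blast
  define T' where "T' i \<rho> \<omega> = T i (\<lambda>v. G v i \<rho>) (\<lambda>b. H b i \<omega>)" for i \<rho> \<omega>
  have "rng T' \<subseteq> rng T" unfolding rng_def T'_def by auto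
  then have fin: "finite (rng T')" using T(1) finite_subset by blast
  have cs: "cset T' \<sigma> \<beta> c = cset T (\<lambda>v i. G v i (\<lambda>w. \<sigma> w i)) (\<lambda>b. {i. H b i (\<lambda>c. i \<in> \<beta> c)}) c" for \<sigma> \<beta> c
    unfolding cset_def T'_def by simp
  show ?thesis unfolding det_def
    by (rule exI[of _ T'], rule exI[of _ K]) (use fin T(2) in \<open>auto simp: sameK_def cs\<close>)
qed




lemma upd_loc: "(\<lambda>v. (\<sigma>(k := a)) v i) = (\<lambda>v. \<sigma> v i)(k := a i)"
  by (auto simp: fun_eq_iff)

lemma upd_locb: "(\<lambda>b. i \<in> (\<beta>(k := S)) b) = (\<lambda>b. i \<in> \<beta> b)(k := (i \<in> S))"
  by (auto simp: fun_eq_iff)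

lemma det_BEx:
  assumes "det Q"
  shows "det (\<lambda>\<sigma> \<beta>. \<exists>S. Q \<sigma> (\<beta>(k := S)))"
proof -
  obtain T K where T: "finite (rng T)" "\<And>\<sigma> \<beta> \<sigma>' \<beta>'. sameK T K \<sigma> \<beta> \<sigma>' \<beta>' \<Longrightarrow> Q \<sigma> \<beta> = Q \<sigma>' \<beta>'"
    using assms unfolding det_def by blast
  define T' where "T' i \<rho> w = prod_encode (T i \<rho> (w(k := False)), T i \<rho> (w(k := True)))" for i \<rho> w
  have "rng T' \<subseteq> prod_encode ` (rng T \<times> rng T)"
  proof
    fix x assume "x \<in> rng T'"
    then obtain i r w where "x = T' i r w" unfolding rng_def by blast
    then show "x \<in> prod_encode ` (rng T \<times> rng T)" unfolding T'_def by (auto intro: rngI)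
  qed
  then have fin: "finite (rng T')" using T(1) finite_subset by blast
  have dir: "\<exists>S'. Q \<sigma>' (\<beta>'(k := S'))" if s: "sameK T' (K + K) \<sigma> \<beta> \<sigma>' \<beta>'" and S: "Q \<sigma> (\<beta>(k := S))"
    for \<sigma> \<beta> \<sigma>' \<beta>' S
  proof -
    define P where "P d = cset T' \<sigma> \<beta> d" for d
    define P' where "P' d = cset T' \<sigma>' \<beta>' d" for d
    have "\<exists>A'. A' \<subseteq> P' d \<and> tr K A' = tr K (P d \<inter> S) \<and> tr K (P' d - A') = tr K (P d - P d \<inter> S)" for d
      by (rule split_lemma) (use s in \<open>auto simp: sameK_def P_def P'_def\<close>)
    moreover have "P d - P d \<inter> S = P d - S" for d by blast
    ultimately have "\<forall>d. \<exists>A'. A' \<subseteq> P' d \<and> tr K A' = tr K (P d \<inter> S) \<and> tr K (P' d - A') = tr K (P d - S)"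
      by simp
    then obtain A' where "\<forall>d. A' d \<subseteq> P' d \<and> tr K (A' d) = tr K (P d \<inter> S) \<and> tr K (P' d - A' d) = tr K (P d - S)"
      by (rule choice[THEN exE]) blast
    then have A': "\<And>d. A' d \<subseteq> P' d" "\<And>d. tr K (A' d) = tr K (P d \<inter> S)"
      "\<And>d. tr K (P' d - A' d) = tr K (P d - S)" by auto
    define S' where "S' = (\<Union>d. A' d)"
    have PS': "i \<in> P' d \<Longrightarrow> i \<in> S' \<longleftrightarrow> i \<in> A' d" for i d
      using A'(1) unfolding S'_def P'_def cset_def by blast
    define X where "X c = (\<lambda>(d, b). if b then (if snd (prod_decode d) = c then P d \<inter> S else {})
                                    else (if fst (prod_decode d) = c then P d - S else {}))" for c
    define Y where "Y c = (\<lambda>(d, b). if b then (if snd (prod_decode d) = c then A' d else {})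
                                    else (if fst (prod_decode d) = c then P' d - A' d else {}))" for c
    have eX: "cset T \<sigma> (\<beta>(k := S)) c = (\<Union>p\<in>rng T' \<times> UNIV. X c p)" for c
    proof -
      have "i \<in> cset T \<sigma> (\<beta>(k := S)) c \<longleftrightarrow> i \<in> (\<Union>p\<in>rng T' \<times> UNIV. X c p)" for i
      proof -
        define d where "d = T' i (\<lambda>v. \<sigma> v i) (\<lambda>b. i \<in> \<beta> b)"
        have d: "d \<in> rng T'" "i \<in> P d" unfolding d_def P_def cset_def by (auto intro: rngI)
        have uni: "i \<in> P e \<Longrightarrow> e = d" for e unfolding P_def cset_def d_def by auto
        have "i \<in> cset T \<sigma> (\<beta>(k := S)) c \<longleftrightarrow> (if i \<in> S then snd (prod_decode d) = c else fst (prod_decode d) = c)"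
          unfolding cset_def d_def T'_def upd_locb by (cases "i \<in> S") simp_all
        also have "\<dots> \<longleftrightarrow> i \<in> (\<Union>p\<in>rng T' \<times> UNIV. X c p)"
        proof
          assume h: "if i \<in> S then snd (prod_decode d) = c else fst (prod_decode d) = c"
          have "i \<in> X c (d, i \<in> S)" using h d(2) unfolding X_def by (cases "i \<in> S") simp_all
          then show "i \<in> (\<Union>p\<in>rng T' \<times> UNIV. X c p)" by (rule UN_I[rotated]) (simp add: d(1))
        next
          assume "i \<in> (\<Union>p\<in>rng T' \<times> UNIV. X c p)"
          then obtain e b where e: "i \<in> X c (e, b)" by auto
          then have "i \<in> P e" unfolding X_def by (auto split: if_splits)
          then have "e = d" by (rule uni)
          with e show "if i \<in> S then snd (prod_decode d) = c else fst (prod_decode d) = c"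
            unfolding X_def by (cases b) (auto split: if_splits)
        qed
        finally show ?thesis .
      qed
      then show ?thesis by (rule set_eqI)
    qed
    have eY: "cset T \<sigma>' (\<beta>'(k := S')) c = (\<Union>p\<in>rng T' \<times> UNIV. Y c p)" for c
    proof -
      have "i \<in> cset T \<sigma>' (\<beta>'(k := S')) c \<longleftrightarrow> i \<in> (\<Union>p\<in>rng T' \<times> UNIV. Y c p)" for i
      proof -
        define d where "d = T' i (\<lambda>v. \<sigma>' v i) (\<lambda>b. i \<in> \<beta>' b)"
        have d: "d \<in> rng T'" "i \<in> P' d" unfolding d_def P'_def cset_def by (auto intro: rngI)
        have uni: "i \<in> P' e \<Longrightarrow> e = d" for e unfolding P'_def cset_def d_def by auto
        have "i \<in> cset T \<sigma>' (\<beta>'(k := S')) c \<longleftrightarrow> (if i \<in> S' then snd (prod_decode d) = c else fst (prod_decode d) = c)"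
          unfolding cset_def d_def T'_def upd_locb by (cases "i \<in> S'") simp_all
        also have "\<dots> \<longleftrightarrow> i \<in> (\<Union>p\<in>rng T' \<times> UNIV. Y c p)"
        proof
          assume h: "if i \<in> S' then snd (prod_decode d) = c else fst (prod_decode d) = c"
          have "i \<in> Y c (d, i \<in> S')" using h d(2) PS'[OF d(2)] unfolding Y_def by (cases "i \<in> S'") simp_all
          then show "i \<in> (\<Union>p\<in>rng T' \<times> UNIV. Y c p)" by (rule UN_I[rotated]) (simp add: d(1))
        next
          assume "i \<in> (\<Union>p\<in>rng T' \<times> UNIV. Y c p)"
          then obtain e b where e: "i \<in> Y c (e, b)" by auto
          then have "i \<in> P' e" unfolding Y_def using A'(1) by (auto split: if_splits)
          then have "e = d" by (rule uni)
          with e show "if i \<in> S' then snd (prod_decode d) = c else fst (prod_decode d) = c"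
            unfolding Y_def using PS'[OF d(2)] by (cases b) (auto split: if_splits)
        qed
        finally show ?thesis .
      qed
      then show ?thesis by (rule set_eqI)
    qed
    have Pdisj: "d \<noteq> e \<Longrightarrow> P d \<inter> P e = {}" for d e unfolding P_def by (rule cset_disj)
    have P'disj: "d \<noteq> e \<Longrightarrow> P' d \<inter> P' e = {}" for d e unfolding P'_def by (rule cset_disj)
    have Xsub: "X c (d, b) \<subseteq> P d \<inter> {i. (i \<in> S) = b}" for c d b
      unfolding X_def by auto
    have Ysub: "Y c (d, b) \<subseteq> P' d \<inter> {i. (i \<in> S') = b}" for c d b
      unfolding Y_def using PS' A'(1) by auto
    have dX: "disjoint_family_on (X c) (rng T' \<times> UNIV)" for c
      unfolding disjoint_family_on_def
    proof (intro ballI impI)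
      fix p q :: "nat \<times> bool" assume "p \<noteq> q"
      then show "X c p \<inter> X c q = {}"
        using Xsub[of c "fst p" "snd p"] Xsub[of c "fst q" "snd q"] Pdisj[of "fst p" "fst q"]
        by (cases p, cases q, cases "fst p = fst q") auto
    qed
    have dY: "disjoint_family_on (Y c) (rng T' \<times> UNIV)" for c
      unfolding disjoint_family_on_def
    proof (intro ballI impI)
      fix p q :: "nat \<times> bool" assume "p \<noteq> q"
      then show "Y c p \<inter> Y c q = {}"
        using Ysub[of c "fst p" "snd p"] Ysub[of c "fst q" "snd q"] P'disj[of "fst p" "fst q"]
        by (cases p, cases q, cases "fst p = fst q") auto
    qed
    have "sameK T K \<sigma> (\<beta>(k := S)) \<sigma>' (\<beta>'(k := S'))"
      unfolding sameK_def eX eY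
    proof (intro allI tr_Union_finite)
      fix c p assume "p \<in> rng T' \<times> (UNIV :: bool set)"
      show "tr K (X c p) = tr K (Y c p)"
        using A'(2,3) unfolding X_def Y_def by (cases p) auto
    qed (use fin dX dY in auto)
    then have "Q \<sigma>' (\<beta>'(k := S'))" using T(2) S by simp
    then show ?thesis by (rule exI)
  qed
  have sym: "sameK T' (K + K) \<sigma>' \<beta>' \<sigma> \<beta>" if "sameK T' (K + K) \<sigma> \<beta> \<sigma>' \<beta>'" for \<sigma> \<beta> \<sigma>' \<beta>'
    using that unfolding sameK_def by simp
  show ?thesis unfolding det_def
  proof (intro exI conjI allI impI)
    show "finite (rng T')" by (rule fin)
    fix \<sigma> \<beta> \<sigma>' \<beta>' assume a: "sameK T' (K + K) \<sigma> \<beta> \<sigma>' \<beta>'"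
    show "(\<exists>S. Q \<sigma> (\<beta>(k := S))) = (\<exists>S. Q \<sigma>' (\<beta>'(k := S)))"
      using dir[OF a] dir[OF sym[OF a]] by blast
  qed
qed

lemma det_PEx:
  assumes "det Q"
  shows "det (\<lambda>\<sigma> \<beta>. \<exists>a\<in>prod_carrier M. Q (\<sigma>(k := a)) \<beta>)"
proof -
  obtain T K where T: "finite (rng T)" "\<And>\<sigma> \<beta> \<sigma>' \<beta>'. sameK T K \<sigma> \<beta> \<sigma>' \<beta>' \<Longrightarrow> Q \<sigma> \<beta> = Q \<sigma>' \<beta>'"
    using assms unfolding det_def by blast
  define R where "R i \<rho> w = {T i (\<rho>(k := u)) w | u. u \<in> dom (M i)}" for i \<rho> w
  have Rsub: "R i \<rho> w \<subseteq> rng T" for i \<rho> w unfolding R_def by (auto intro: rngI)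
  have Rfin: "finite (R i \<rho> w)" for i \<rho> w by (rule finite_subset[OF Rsub T(1)])
  define T' where "T' i \<rho> w = set_encode (R i \<rho> w)" for i \<rho> w
  have "rng T' \<subseteq> set_encode ` Pow (rng T)"
  proof
    fix x assume "x \<in> rng T'"
    then obtain i r w where x: "x = T' i r w" unfolding rng_def by blast
    have "R i r w \<in> Pow (rng T)" using Rsub by simp
    then show "x \<in> set_encode ` Pow (rng T)" unfolding x T'_def by (rule imageI)
  qed
  then have fin: "finite (rng T')" using T(1) finite_subset by blast
  define N where "N = card (rng T)"
  define K' where "K' = K * N + 1"
  have dir: "\<exists>a'\<in>prod_carrier M. Q (\<sigma>'(k := a')) \<beta>'"
    if s: "sameK T' K' \<sigma> \<beta> \<sigma>' \<beta>'" and a: "a \<in> prod_carrier M" and Qa: "Q (\<sigma>(k := a)) \<beta>"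
    for \<sigma> \<beta> \<sigma>' \<beta>' a
  proof -
    define P where "P d = cset T' \<sigma> \<beta> d" for d
    define P' where "P' d = cset T' \<sigma>' \<beta>' d" for d
    define f where "f i = T i ((\<lambda>v. \<sigma> v i)(k := a i)) (\<lambda>b. i \<in> \<beta> b)" for i
    have aD: "a i \<in> dom (M i)" for i using a unfolding prod_carrier_def by (auto simp: PiE_iff)
    have decP: "set_decode d = R i (\<lambda>v. \<sigma> v i) (\<lambda>b. i \<in> \<beta> b)" if "i \<in> P d" for i d
      using that unfolding P_def cset_def T'_def using Rfin by auto
    have decP': "set_decode d = R i (\<lambda>v. \<sigma>' v i) (\<lambda>b. i \<in> \<beta>' b)" if "i \<in> P' d" for i d
      using that unfolding P'_def cset_def T'_def using Rfin by auto
    have fR: "f i \<in> R i (\<lambda>v. \<sigma> v i) (\<lambda>b. i \<in> \<beta> b)" for i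
      unfolding f_def R_def using aD by auto
    have sP: "tr K' (P d) = tr K' (P' d)" for d using s unfolding sameK_def P_def P'_def by simp
    have ex: "\<exists>g. g ` P' d \<subseteq> set_decode d \<and> (\<forall>c. tr K {i\<in>P' d. g i = c} = tr K {i\<in>P d. f i = c})" for d
    proof (cases "P d = {}")
      case True
      have "tr (Suc 0) (P d) = tr (Suc 0) (P' d)" by (rule tr_mono_K[OF _ sP]) (simp add: K'_def)
      then have "P' d = {}" using True tr1_zero by (metis tr_empty)
      then show ?thesis using True by auto
    next
      case False
      then obtain i0 where i0: "i0 \<in> P d" by blast
      define cs where "cs = sorted_list_of_set (set_decode d)"
      have sd: "set_decode d = R i0 (\<lambda>v. \<sigma> v i0) (\<lambda>b. i0 \<in> \<beta> b)" by (rule decP[OF i0])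
      have fin_d: "finite (set_decode d)" using sd Rfin by simp
      have scs: "set cs = set_decode d" and dcs: "distinct cs" using fin_d unfolding cs_def by simp_all
      have "f i0 \<in> set cs" using fR[of i0] sd scs by simp
      then have ne: "cs \<noteq> []" by auto
      have "length cs = card (set_decode d)" unfolding cs_def by simp
      also have "\<dots> \<le> N" unfolding N_def sd by (rule card_mono[OF T(1) Rsub])
      finally have len: "length cs \<le> N" .
      have "K * length cs \<le> K'" unfolding K'_def using mult_le_mono2[OF len, of K] by linarith
      then have eqc: "tr (K * length cs) (P d) = tr (K * length cs) (P' d)" by (rule tr_mono_K[OF _ sP])
      have fP: "f ` P d \<subseteq> set cs"
      proof
        fix x assume "x \<in> f ` P d"
        then obtain i where i: "i \<in> P d" "x = f i" by blast
        show "x \<in> set cs" using fR[of i] decP[OF i(1)] scs i(2) by simp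
      qed
      obtain g where g: "g ` P' d \<subseteq> set cs" "\<forall>c. tr K {i\<in>P' d. g i = c} = tr K {i\<in>P d. f i = c}"
        using multi_split[OF dcs ne eqc fP] by blast
      show ?thesis by (rule exI[of _ g]) (use g scs in simp)
    qed
    have "\<forall>d. \<exists>g. g ` P' d \<subseteq> set_decode d \<and> (\<forall>c. tr K {i\<in>P' d. g i = c} = tr K {i\<in>P d. f i = c})"
      by (rule allI, rule ex)
    then obtain gg where gg: "\<forall>d. gg d ` P' d \<subseteq> set_decode d \<and> (\<forall>c. tr K {i\<in>P' d. gg d i = c} = tr K {i\<in>P d. f i = c})"
      by (rule choice[THEN exE]) blast
    define d' where "d' i = T' i (\<lambda>v. \<sigma>' v i) (\<lambda>b. i \<in> \<beta>' b)" for i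
    define a' where "a' i = (SOME u. u \<in> dom (M i) \<and> T i ((\<lambda>v. \<sigma>' v i)(k := u)) (\<lambda>b. i \<in> \<beta>' b) = gg (d' i) i)" for i
    have a'P: "a' i \<in> dom (M i) \<and> T i ((\<lambda>v. \<sigma>' v i)(k := a' i)) (\<lambda>b. i \<in> \<beta>' b) = gg (d' i) i" for i
    proof -
      have iP: "i \<in> P' (d' i)" unfolding P'_def cset_def d'_def by simp
      have "gg (d' i) ` P' (d' i) \<subseteq> set_decode (d' i)" using gg by simp
      then have "gg (d' i) i \<in> set_decode (d' i)" using iP by (rule subsetD[OF _ imageI])
      also have "set_decode (d' i) = R i (\<lambda>v. \<sigma>' v i) (\<lambda>b. i \<in> \<beta>' b)" by (rule decP'[OF iP])
      finally have "\<exists>u. u \<in> dom (M i) \<and> T i ((\<lambda>v. \<sigma>' v i)(k := u)) (\<lambda>b. i \<in> \<beta>' b) = gg (d' i) i"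
        unfolding R_def by auto
      then show ?thesis unfolding a'_def by (rule someI_ex)
    qed
    have a'c: "a' \<in> prod_carrier M" unfolding prod_carrier_def using a'P by (auto simp: PiE_iff)
    have eX: "cset T (\<sigma>(k := a)) \<beta> c = (\<Union>d\<in>rng T'. {i\<in>P d. f i = c})" for c
    proof (rule set_eqI)
      fix i
      have "i \<in> cset T (\<sigma>(k := a)) \<beta> c \<longleftrightarrow> f i = c" unfolding cset_def f_def upd_loc by simp
      moreover have h2: "i \<in> P (T' i (\<lambda>v. \<sigma> v i) (\<lambda>b. i \<in> \<beta> b))" unfolding P_def cset_def by simp
      ultimately show "i \<in> cset T (\<sigma>(k := a)) \<beta> c \<longleftrightarrow> i \<in> (\<Union>d\<in>rng T'. {i\<in>P d. f i = c})"
      proof -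
        assume h1: "i \<in> cset T (\<sigma>(k := a)) \<beta> c \<longleftrightarrow> f i = c"
        show ?thesis
        proof
          assume "i \<in> cset T (\<sigma>(k := a)) \<beta> c"
          then have "i \<in> {i\<in>P (T' i (\<lambda>v. \<sigma> v i) (\<lambda>b. i \<in> \<beta> b)). f i = c}" using h1 h2 by simp
          then show "i \<in> (\<Union>d\<in>rng T'. {i\<in>P d. f i = c})"
            using rngI[of T' i "\<lambda>v. \<sigma> v i" "\<lambda>b. i \<in> \<beta> b"] by blast
        next
          assume "i \<in> (\<Union>d\<in>rng T'. {i\<in>P d. f i = c})"
          then have "f i = c" by simp
          then show "i \<in> cset T (\<sigma>(k := a)) \<beta> c" using h1 by simp
        qed
      qed
    qed
    have eY: "cset T (\<sigma>'(k := a')) \<beta>' c = (\<Union>d\<in>rng T'. {i\<in>P' d. gg d i = c})" for c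
    proof (rule set_eqI)
      fix i
      have "i \<in> cset T (\<sigma>'(k := a')) \<beta>' c \<longleftrightarrow> gg (d' i) i = c" unfolding cset_def upd_loc using a'P[of i] by simp
      moreover have h2: "i \<in> P' (d' i)" unfolding P'_def cset_def d'_def by simp
      moreover have h3: "i \<in> P' d \<Longrightarrow> d' i = d" for d unfolding P'_def cset_def d'_def by simp
      ultimately show "i \<in> cset T (\<sigma>'(k := a')) \<beta>' c \<longleftrightarrow> i \<in> (\<Union>d\<in>rng T'. {i\<in>P' d. gg d i = c})"
      proof -
        assume h1: "i \<in> cset T (\<sigma>'(k := a')) \<beta>' c \<longleftrightarrow> gg (d' i) i = c"
        show ?thesis
        proof
          assume "i \<in> cset T (\<sigma>'(k := a')) \<beta>' c"
          then have "i \<in> {i\<in>P' (d' i). gg (d' i) i = c}" using h1 h2 by simp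
          then show "i \<in> (\<Union>d\<in>rng T'. {i\<in>P' d. gg d i = c})"
            using rngI[of T' i "\<lambda>v. \<sigma>' v i" "\<lambda>b. i \<in> \<beta>' b"] unfolding d'_def by blast
        next
          assume "i \<in> (\<Union>d\<in>rng T'. {i\<in>P' d. gg d i = c})"
          then obtain d where "i \<in> P' d" "gg d i = c" by blast
          then show "i \<in> cset T (\<sigma>'(k := a')) \<beta>' c" using h1 h3 by simp
        qed
      qed
    qed
    have Pdisj: "d \<noteq> e \<Longrightarrow> P d \<inter> P e = {}" for d e unfolding P_def by (rule cset_disj)
    have P'disj: "d \<noteq> e \<Longrightarrow> P' d \<inter> P' e = {}" for d e unfolding P'_def by (rule cset_disj)
    have "sameK T K (\<sigma>(k := a)) \<beta> (\<sigma>'(k := a')) \<beta>'"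
      unfolding sameK_def eX eY
    proof (intro allI tr_Union_finite fin)
      fix c d :: nat show "tr K {i\<in>P d. f i = c} = tr K {i\<in>P' d. gg d i = c}" using gg by simp
    next
      fix c :: nat show "disjoint_family_on (\<lambda>d. {i\<in>P d. f i = c}) (rng T')"
        unfolding disjoint_family_on_def
      proof (intro ballI impI)
        fix d e :: nat assume "d \<noteq> e"
        then have "P d \<inter> P e = {}" by (rule Pdisj)
        then show "{i\<in>P d. f i = c} \<inter> {i\<in>P e. f i = c} = {}" by blast
      qed
    next
      fix c :: nat show "disjoint_family_on (\<lambda>d. {i\<in>P' d. gg d i = c}) (rng T')"
        unfolding disjoint_family_on_def
      proof (intro ballI impI)
        fix d e :: nat assume "d \<noteq> e"
        then have "P' d \<inter> P' e = {}" by (rule P'disj)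
        then show "{i\<in>P' d. gg d i = c} \<inter> {i\<in>P' e. gg e i = c} = {}" by blast
      qed
    qed
    then have "Q (\<sigma>'(k := a')) \<beta>'" using T(2) Qa by simp
    then show ?thesis using a'c by blast
  qed
  have sym: "sameK T' K' \<sigma>' \<beta>' \<sigma> \<beta>" if "sameK T' K' \<sigma> \<beta> \<sigma>' \<beta>'" for \<sigma> \<beta> \<sigma>' \<beta>'
    using that unfolding sameK_def by simp
  show ?thesis unfolding det_def
  proof (intro exI conjI allI impI)
    show "finite (rng T')" by (rule fin)
    fix \<sigma> \<beta> \<sigma>' \<beta>' assume a: "sameK T' K' \<sigma> \<beta> \<sigma>' \<beta>'"
    show "(\<exists>a\<in>prod_carrier M. Q (\<sigma>(k := a)) \<beta>) = (\<exists>a\<in>prod_carrier M. Q (\<sigma>'(k := a)) \<beta>')"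
      using dir[OF a] dir[OF sym[OF a]] by blast
  qed
qed




fun bl :: "('i \<Rightarrow> ('f, 'r, 'a) lstruct) \<Rightarrow> 'i \<Rightarrow> (nat \<Rightarrow> 'a) \<Rightarrow> (nat \<Rightarrow> bool) \<Rightarrow> ('f, 'r) bterm \<Rightarrow> bool" where
  "bl M i \<rho> w (BVar k) = w k"
| "bl M i \<rho> w BZero = False"
| "bl M i \<rho> w BOne = True"
| "bl M i \<rho> w (BUn s t) = (bl M i \<rho> w s \<or> bl M i \<rho> w t)"
| "bl M i \<rho> w (BInt s t) = (bl M i \<rho> w s \<and> bl M i \<rho> w t)"
| "bl M i \<rho> w (BCompl s) = (\<not> bl M i \<rho> w s)"
| "bl M i \<rho> w (Br \<phi> vs) = lsat (M i) (\<lambda>k. if k < length vs then \<rho> (vs ! k) else undefined) \<phi>"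

lemma bval_local: "i \<in> bval M \<sigma> \<beta> s \<longleftrightarrow> bl M i (\<lambda>v. \<sigma> v i) (\<lambda>b. i \<in> \<beta> b) s"
  by (induction s) auto

lemma det_fvsat: "det (\<lambda>\<sigma> \<beta>. fvsat M \<sigma> \<beta> \<psi>)"
proof (induction \<psi>)
  case FFalse
  show ?case by (rule det_eq[OF det_atom[of "\<lambda>i \<rho> w. False"]]) simp
next
  case (PEq j k)
  show ?case by (rule det_eq[OF det_atom[of "\<lambda>i \<rho> w. \<rho> j = \<rho> k"]]) (simp add: fun_eq_iff)
next
  case (BEq s t)
  show ?case
    by (rule det_eq[OF det_atom[of "\<lambda>i \<rho> w. bl M i \<rho> w s = bl M i \<rho> w t"]])
      (simp add: set_eq_iff bval_local)
next
  case (FNeg \<psi>)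
  then show ?case by (simp add: det_not)
next
  case (FConj \<psi>1 \<psi>2)
  then show ?case by (simp add: det_conj)
next
  case (PEx k \<psi>)
  show ?case unfolding fvsat.simps by (rule det_PEx[OF PEx.IH])
next
  case (BEx k \<psi>)
  show ?case unfolding fvsat.simps by (rule det_BEx[OF BEx.IH])
qed

definition shift :: "nat \<Rightarrow> nat \<Rightarrow> (nat \<Rightarrow> 'x) \<Rightarrow> (nat \<Rightarrow> 'x) \<Rightarrow> nat \<Rightarrow> 'x" where
  "shift m n \<sigma> z = (\<lambda>v. if m \<le> v \<and> v < m + n then z (v - m) else \<sigma> v)"

lemma shift_0: "shift m 0 \<sigma> z = \<sigma>" by (auto simp: shift_def fun_eq_iff)

lemma shift_Suc1: "z n = a \<Longrightarrow> shift m n (\<sigma>(m + n := a)) (restrict z {..<n}) = shift m (Suc n) \<sigma> z"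
  by (auto simp: shift_def fun_eq_iff)

lemma shift_Suc2: "shift m n (\<sigma>(m + n := a)) z = shift m (Suc n) \<sigma> (z(n := a))"
  by (auto simp: shift_def fun_eq_iff)

lemma det_ex_tuple:
  assumes "det Q"
  shows "det (\<lambda>\<sigma> \<beta>. \<exists>z\<in>Pi\<^sub>E {..<n} (\<lambda>_. prod_carrier M). Q (shift m n \<sigma> z) \<beta>)"
proof (induction n)
  case 0
  show ?case by (rule det_eq[OF assms]) (simp add: shift_0)
next
  case (Suc n)
  have "det (\<lambda>\<sigma> \<beta>. \<exists>a\<in>prod_carrier M. (\<lambda>\<sigma> \<beta>. \<exists>z\<in>Pi\<^sub>E {..<n} (\<lambda>_. prod_carrier M). Q (shift m n \<sigma> z) \<beta>) (\<sigma>(m + n := a)) \<beta>)"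
    by (rule det_PEx[OF Suc])
  then show ?case
  proof (rule det_eq)
    fix \<sigma> \<beta>
    show "(\<exists>a\<in>prod_carrier M. \<exists>z\<in>Pi\<^sub>E {..<n} (\<lambda>_. prod_carrier M). Q (shift m n (\<sigma>(m + n := a)) z) \<beta>) =
          (\<exists>z\<in>Pi\<^sub>E {..<Suc n} (\<lambda>_. prod_carrier M). Q (shift m (Suc n) \<sigma> z) \<beta>)"
    proof
      assume "\<exists>a\<in>prod_carrier M. \<exists>z\<in>Pi\<^sub>E {..<n} (\<lambda>_. prod_carrier M). Q (shift m n (\<sigma>(m + n := a)) z) \<beta>"
      then obtain a z where a: "a \<in> prod_carrier M" and z: "z \<in> Pi\<^sub>E {..<n} (\<lambda>_. prod_carrier M)"
        and q: "Q (shift m n (\<sigma>(m + n := a)) z) \<beta>" by blast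
      have "z(n := a) \<in> Pi\<^sub>E {..<Suc n} (\<lambda>_. prod_carrier M)"
        unfolding PiE_iff
      proof
        show "\<forall>i\<in>{..<Suc n}. (z(n := a)) i \<in> prod_carrier M"
        proof
          fix i assume i: "i \<in> {..<Suc n}"
          show "(z(n := a)) i \<in> prod_carrier M"
          proof (cases "i = n")
            case True then show ?thesis using a by simp
          next
            case False then have "i \<in> {..<n}" using i by simp
            then show ?thesis using PiE_mem[OF z] False by simp
          qed
        qed
        have ze: "z \<in> extensional {..<n}" using z by (simp add: PiE_iff)
        show "z(n := a) \<in> extensional {..<Suc n}"
          unfolding extensional_def
        proof (intro CollectI allI impI)
          fix x assume "x \<notin> {..<Suc n}"
          then have "x \<noteq> n" "x \<notin> {..<n}" by simp_all
          then show "(z(n := a)) x = undefined" using ze unfolding extensional_def by simp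
        qed
      qed
      moreover have "Q (shift m (Suc n) \<sigma> (z(n := a))) \<beta>" using q unfolding shift_Suc2 .
      ultimately show "\<exists>z\<in>Pi\<^sub>E {..<Suc n} (\<lambda>_. prod_carrier M). Q (shift m (Suc n) \<sigma> z) \<beta>" by (rule bexI[where x="z(n := a)", rotated])
    next
      assume "\<exists>z\<in>Pi\<^sub>E {..<Suc n} (\<lambda>_. prod_carrier M). Q (shift m (Suc n) \<sigma> z) \<beta>"
      then obtain z where z: "z \<in> Pi\<^sub>E {..<Suc n} (\<lambda>_. prod_carrier M)" and q: "Q (shift m (Suc n) \<sigma> z) \<beta>" by blast
      have a: "z n \<in> prod_carrier M" using z by (simp add: PiE_iff)
      have "restrict z {..<n} \<in> Pi\<^sub>E {..<n} (\<lambda>_. prod_carrier M)" using z by (simp add: PiE_iff)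
      moreover have "Q (shift m n (\<sigma>(m + n := z n)) (restrict z {..<n})) \<beta>" using q unfolding shift_Suc1[OF refl] .
      ultimately show "\<exists>a\<in>prod_carrier M. \<exists>z\<in>Pi\<^sub>E {..<n} (\<lambda>_. prod_carrier M). Q (shift m n (\<sigma>(m + n := a)) z) \<beta>"
        using a by (intro bexI[of _ "z n"] bexI[of _ "restrict z {..<n}"])
    qed
  qed
qed




definition lcu :: "'x topology \<Rightarrow> 'x set \<Rightarrow> bool" where
  "lcu X A \<longleftrightarrow> (\<exists>L. finite L \<and> (\<forall>p\<in>L. openin X (fst p) \<and> closedin X (snd p)) \<and> A = (\<Union>p\<in>L. fst p \<inter> snd p))"

lemma borel_of_sets_open: "openin X U \<Longrightarrow> U \<in> sets (borel_of X)"
  unfolding borel_of_def by (rule in_measure_of) (auto dest: openin_subset)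

lemma space_borel_of: "space (borel_of X) = topspace X"
  unfolding borel_of_def by (rule space_measure_of_conv)

lemma borel_of_sets_closed: "closedin X F \<Longrightarrow> F \<in> sets (borel_of X)"
proof -
  assume F: "closedin X F"
  then have "openin X (topspace X - F)" by (simp add: openin_diff)
  then have "topspace X - F \<in> sets (borel_of X)" by (rule borel_of_sets_open)
  then have "space (borel_of X) - (topspace X - F) \<in> sets (borel_of X)" by (rule sets.compl_sets)
  moreover have "space (borel_of X) - (topspace X - F) = F" using F closedin_subset space_borel_of by fastforce
  ultimately show ?thesis by simp
qed

lemma lcu_borel: "lcu X A \<Longrightarrow> A \<in> sets (borel_of X)"
  unfolding lcu_def
proof (elim exE conjE)
  fix L assume L: "finite L" "\<forall>p\<in>L. openin X (fst p) \<and> closedin X (snd p)" "A = (\<Union>p\<in>L. fst p \<inter> snd p)"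
  have "(\<Union>p\<in>L. fst p \<inter> snd p) \<in> sets (borel_of X)"
    using L(1)
  proof (rule sets.finite_UN)
    fix p assume "p \<in> L"
    then show "fst p \<inter> snd p \<in> sets (borel_of X)"
      using L(2) borel_of_sets_open borel_of_sets_closed by (metis sets.Int)
  qed
  then show "A \<in> sets (borel_of X)" using L(3) by simp
qed

lemma finite_open_union_not_cover:
  assumes "finite D" "\<And>E. E \<in> D \<Longrightarrow> closedin X E"
    and prp: "\<And>E V. E \<in> D \<Longrightarrow> openin X V \<Longrightarrow> V \<inter> C \<noteq> {} \<Longrightarrow> \<not> (V \<inter> C \<subseteq> E)"
  shows "openin X V \<Longrightarrow> V \<inter> C \<noteq> {} \<Longrightarrow> \<not> (V \<inter> C \<subseteq> \<Union>D)"
  using assms(1,2) prp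
proof (induction D arbitrary: V rule: finite_induct)
  case empty then show ?case by simp
next
  case (insert E D)
  show ?case
  proof
    assume sub: "V \<inter> C \<subseteq> \<Union>(insert E D)"
    have o2: "openin X (V - E)" using insert.prems(1) insert.prems(3) by (simp add: openin_diff)
    have "(V - E) \<inter> C \<noteq> {}"
    proof
      assume "(V - E) \<inter> C = {}"
      then have "V \<inter> C \<subseteq> E" by blast
      then show False using insert.prems(4)[of E V] insert.prems(1,2) by simp
    qed
    moreover have "(V - E) \<inter> C \<subseteq> \<Union>D" using sub by blast
    ultimately show False using insert.IH[OF o2] insert.prems(3,4) by blast
  qed
qed

lemma lcu_closure_meet:
  assumes A: "lcu X A" and B: "lcu X B" and ne: "A \<noteq> {}"
    and AX: "A \<subseteq> topspace X" and BX: "B \<subseteq> topspace X"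
    and cl: "X closure_of A = X closure_of B"
  shows "A \<inter> B \<noteq> {}"
proof -
  obtain LA where LA: "finite LA" "\<forall>p\<in>LA. openin X (fst p) \<and> closedin X (snd p)" "A = (\<Union>p\<in>LA. fst p \<inter> snd p)"
    using A unfolding lcu_def by blast
  obtain LB where LB: "finite LB" "\<forall>p\<in>LB. openin X (fst p) \<and> closedin X (snd p)" "B = (\<Union>p\<in>LB. fst p \<inter> snd p)"
    using B unfolding lcu_def by blast
  define C where "C = X closure_of A"
  define DA where "DA = (\<lambda>p. X closure_of (fst p \<inter> snd p) - fst p) ` LA"
  define DB where "DB = (\<lambda>p. X closure_of (fst p \<inter> snd p) - fst p) ` LB"
  have key: "\<not> (V \<inter> C \<subseteq> X closure_of (fst p \<inter> snd p) - fst p)"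
    if p: "fst p \<inter> snd p \<subseteq> S" and S: "S \<subseteq> C" and V: "openin X V" "V \<inter> C \<noteq> {}" for p S V
  proof
    assume sub: "V \<inter> C \<subseteq> X closure_of (fst p \<inter> snd p) - fst p"
    obtain z where z: "z \<in> V" "z \<in> C" using V(2) by blast
    then have "z \<in> X closure_of (fst p \<inter> snd p)" using sub by blast
    then obtain w where w: "w \<in> fst p \<inter> snd p" "w \<in> V" using z(1) V(1) unfolding in_closure_of by blast
    then have "w \<in> V \<inter> C" using p S by blast
    then show False using sub w by blast
  qed
  have CA: "A \<subseteq> C" unfolding C_def using AX by (rule closure_of_subset)
  have CB: "B \<subseteq> C" unfolding C_def cl using BX by (rule closure_of_subset)
  have D: "finite (DA \<union> DB)" unfolding DA_def DB_def using LA(1) LB(1) by simp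
  have Dcl: "closedin X E" if "E \<in> DA \<union> DB" for E
    using that LA(2) LB(2) unfolding DA_def DB_def by (auto intro: closedin_diff)
  have Dprop: "\<not> (V \<inter> C \<subseteq> E)" if "E \<in> DA \<union> DB" "openin X V" "V \<inter> C \<noteq> {}" for E V
    using that(1)
  proof
    assume "E \<in> DA"
    then obtain p where p: "p \<in> LA" "E = X closure_of (fst p \<inter> snd p) - fst p" unfolding DA_def by blast
    have "fst p \<inter> snd p \<subseteq> A" using p(1) LA(3) by blast
    then show ?thesis using key[OF _ CA that(2,3)] p(2) by blast
  next
    assume "E \<in> DB"
    then obtain p where p: "p \<in> LB" "E = X closure_of (fst p \<inter> snd p) - fst p" unfolding DB_def by blast
    have "fst p \<inter> snd p \<subseteq> B" using p(1) LB(3) by blast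
    then show ?thesis using key[OF _ CB that(2,3)] p(2) by blast
  qed
  have "topspace X \<inter> C \<noteq> {}" using ne CA AX by blast
  then have "\<not> (topspace X \<inter> C \<subseteq> \<Union>(DA \<union> DB))"
    using finite_open_union_not_cover[OF D Dcl Dprop] by blast
  then obtain z where z: "z \<in> C" "z \<notin> \<Union>(DA \<union> DB)" by blast
  have zA: "z \<in> A"
  proof -
    have "C = (\<Union>p\<in>LA. X closure_of (fst p \<inter> snd p))"
      unfolding C_def LA(3) using closure_of_Union[of "(\<lambda>p. fst p \<inter> snd p) ` LA" X] LA(1) by simp
    then obtain p where p: "p \<in> LA" "z \<in> X closure_of (fst p \<inter> snd p)" using z(1) by blast
    then have "z \<in> fst p" using z(2) unfolding DA_def by blast
    moreover have "z \<in> snd p"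
      using p(2) closure_of_minimal[of "fst p \<inter> snd p" "snd p" X] LA(2) p(1) by blast
    ultimately show ?thesis using p(1) LA(3) by blast
  qed
  have zB: "z \<in> B"
  proof -
    have "C = (\<Union>p\<in>LB. X closure_of (fst p \<inter> snd p))"
      unfolding C_def cl LB(3) using closure_of_Union[of "(\<lambda>p. fst p \<inter> snd p) ` LB" X] LB(1) by simp
    then obtain p where p: "p \<in> LB" "z \<in> X closure_of (fst p \<inter> snd p)" using z(1) by blast
    then have "z \<in> fst p" using z(2) unfolding DB_def by blast
    moreover have "z \<in> snd p"
      using p(2) closure_of_minimal[of "fst p \<inter> snd p" "snd p" X] LB(2) p(1) by blast
    ultimately show ?thesis using p(1) LB(3) by blast
  qed
  show ?thesis using zA zB by blast
qed




lemma top_tuple: "topspace (tuple_top M n) = tuples M n"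
  unfolding tuple_top_def prod_top_def tuples_def prod_carrier_def by simp

lemma tuples_mem: "x \<in> tuples M n \<Longrightarrow> k < n \<Longrightarrow> x k i \<in> dom (M i)"
  unfolding tuples_def prod_carrier_def by (auto simp: PiE_iff)

lemma tuples_undef: "x \<in> tuples M n \<Longrightarrow> \<not> k < n \<Longrightarrow> x k = undefined"
  unfolding tuples_def by (auto simp: PiE_iff extensional_def)

lemma proj_cont: "k < n \<Longrightarrow> continuous_map (tuple_top M n) (discrete_topology (dom (M i))) (\<lambda>z. z k i)"
proof -
  assume k: "k < n"
  have 1: "continuous_map (tuple_top M n) (prod_top M) (\<lambda>z. z k)"
    unfolding tuple_top_def using continuous_map_product_projection[of k "{..<n}" "\<lambda>_. prod_top M"] k by simp
  have 2: "continuous_map (prod_top M) (discrete_topology (dom (M i))) (\<lambda>f. f i)"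
    unfolding prod_top_def using continuous_map_product_projection[of i UNIV "\<lambda>i. discrete_topology (dom (M i))"] by simp
  show ?thesis using continuous_map_compose[OF 1 2] by (simp add: o_def)
qed

definition cyl where "cyl M n F x = {z \<in> tuples M n. \<forall>k<n. \<forall>i\<in>F. z k i = x k i}"

lemma open_inter_fin:
  "finite I \<Longrightarrow> (\<And>i. i \<in> I \<Longrightarrow> openin X (S i)) \<Longrightarrow> openin X (topspace X \<inter> (\<Inter>i\<in>I. S i))"
proof (induction I rule: finite_induct)
  case empty then show ?case by simp
next
  case (insert j I)
  have "topspace X \<inter> (\<Inter>i\<in>insert j I. S i) = S j \<inter> (topspace X \<inter> (\<Inter>i\<in>I. S i))"
    using openin_subset[OF insert.prems[of j]] by auto
  then show ?case using insert by (simp add: openin_Int)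
qed

lemma cyl_open:
  assumes "finite F" "x \<in> tuples M n"
  shows "openin (tuple_top M n) (cyl M n F x)"
proof -
  define S where "S p = {z \<in> topspace (tuple_top M n). z (fst p) (snd p) \<in> {x (fst p) (snd p)}}" for p :: "nat \<times> 'a"
  have "openin (tuple_top M n) (topspace (tuple_top M n) \<inter> (\<Inter>p\<in>{..<n} \<times> F. S p))"
  proof (rule open_inter_fin)
    show "finite ({..<n} \<times> F)" using assms(1) by simp
    fix p assume p: "p \<in> {..<n} \<times> F"
    have "x (fst p) (snd p) \<in> dom (M (snd p))" using tuples_mem[OF assms(2)] p by auto
    then show "openin (tuple_top M n) (S p)"
      unfolding S_def using p by (intro openin_continuous_map_preimage[OF proj_cont]) auto
  qed
  moreover have "topspace (tuple_top M n) \<inter> (\<Inter>p\<in>{..<n} \<times> F. S p) = cyl M n F x"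
    unfolding S_def cyl_def top_tuple by auto
  ultimately show ?thesis by simp
qed

lemma cyl_center: "x \<in> tuples M n \<Longrightarrow> x \<in> cyl M n F x"
  unfolding cyl_def by simp

lemma cyl_base:
  assumes V: "openin (tuple_top M n) V" and x: "x \<in> V"
  shows "\<exists>F. finite F \<and> cyl M n F x \<subseteq> V"
proof -
  obtain U where U: "\<forall>k\<in>{..<n}. openin (prod_top M) (U k)" "x \<in> Pi\<^sub>E {..<n} U" "Pi\<^sub>E {..<n} U \<subseteq> V"
    using V x unfolding tuple_top_def openin_product_topology_alt by blast
  have "\<forall>k\<in>{..<n}. \<exists>W. finite {i. W i \<noteq> dom (M i)} \<and> x k \<in> Pi\<^sub>E UNIV W \<and> Pi\<^sub>E UNIV W \<subseteq> U k"
  proof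
    fix k assume k: "k \<in> {..<n}"
    have "x k \<in> U k" using U(2) k by (auto simp: PiE_iff)
    moreover have "openin (prod_top M) (U k)" using U(1) k by blast
    ultimately show "\<exists>W. finite {i. W i \<noteq> dom (M i)} \<and> x k \<in> Pi\<^sub>E UNIV W \<and> Pi\<^sub>E UNIV W \<subseteq> U k"
      unfolding prod_top_def openin_product_topology_alt by force
  qed
  then obtain W where W: "\<forall>k\<in>{..<n}. finite {i. W k i \<noteq> dom (M i)} \<and> x k \<in> Pi\<^sub>E UNIV (W k) \<and> Pi\<^sub>E UNIV (W k) \<subseteq> U k"
    by (rule bchoice[THEN exE]) blast
  define F where "F = (\<Union>k\<in>{..<n}. {i. W k i \<noteq> dom (M i)})"
  have fin: "finite F" unfolding F_def using W by auto
  have "cyl M n F x \<subseteq> V"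
  proof
    fix z assume z: "z \<in> cyl M n F x"
    then have zt: "z \<in> tuples M n" and zx: "\<And>k i. k < n \<Longrightarrow> i \<in> F \<Longrightarrow> z k i = x k i" unfolding cyl_def by auto
    have "z k \<in> U k" if k: "k < n" for k
    proof -
      have "z k \<in> Pi\<^sub>E UNIV (W k)"
      proof (unfold PiE_iff, intro conjI ballI)
        fix i :: 'a
        show "z k i \<in> W k i"
        proof (cases "W k i = dom (M i)")
          case True then show ?thesis using tuples_mem[OF zt k] by simp
        next
          case False
          then have "i \<in> F" unfolding F_def using k by auto
          then have "z k i = x k i" using zx k by simp
          moreover have "x k i \<in> W k i" using W k by (auto simp: PiE_iff)
          ultimately show ?thesis by simp
        qed
      qed simp
      then show ?thesis using W k by blast
    qed
    then have "z \<in> Pi\<^sub>E {..<n} U" using tuples_undef[OF zt] by (auto simp: PiE_iff extensional_def)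
    then show "z \<in> V" using U(3) by blast
  qed
  then show ?thesis using fin by blast
qed




lemma tr_ge_sub: "F \<subseteq> S \<Longrightarrow> finite F \<Longrightarrow> card F \<le> K \<Longrightarrow> card F \<le> tr K S"
  unfolding tr_def by (auto intro: card_mono)

lemma tr_ge_ex: "j \<le> tr K S \<Longrightarrow> \<exists>F\<subseteq>S. finite F \<and> card F = j"
proof (cases "finite S")
  case True
  assume "j \<le> tr K S"
  then have "j \<le> card S" using True unfolding tr_def by simp
  then show ?thesis using ex_subset_card by blast
next
  case False then show ?thesis using ex_subset_card by blast
qed

lemma cset_out: "c \<notin> rng T \<Longrightarrow> cset T \<sigma> \<beta> c = {}"
  unfolding cset_def using rngI by force

lemma det_lcu:
  assumes "det Q"
    and loc: "\<And>x y i. x \<in> tuples M n \<Longrightarrow> y \<in> tuples M n \<Longrightarrow> (\<forall>k<n. x k i = y k i) \<Longrightarrow> (\<lambda>v. emb x v i) = (\<lambda>v. emb y v i)"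
  shows "lcu (tuple_top M n) {x \<in> tuples M n. Q (emb x) \<beta>0}"
proof -
  obtain T K where T: "finite (rng T)" "\<And>\<sigma> \<beta> \<sigma>' \<beta>'. sameK T K \<sigma> \<beta> \<sigma>' \<beta>' \<Longrightarrow> Q \<sigma> \<beta> = Q \<sigma>' \<beta>'"
    using assms(1) unfolding det_def by blast
  define Rg where "Rg = rng T"
  define cnt where "cnt x c = tr K (cset T (emb x) \<beta>0 c)" for x c
  define G where "G c j = {x \<in> tuples M n. j \<le> cnt x c}" for c j
  have Gopen: "openin (tuple_top M n) (G c j)" for c j
    unfolding openin_subopen[of _ "G c j"]
  proof
    fix x assume x: "x \<in> G c j"
    then have xt: "x \<in> tuples M n" and j: "j \<le> cnt x c" unfolding G_def by auto
    obtain F where F: "F \<subseteq> cset T (emb x) \<beta>0 c" "finite F" "card F = j"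
      using tr_ge_ex[of j K] j unfolding cnt_def by blast
    have jK: "j \<le> K" using j tr_le[of K] unfolding cnt_def by (metis order_trans)
    have "cyl M n F x \<subseteq> G c j"
    proof
      fix z assume z: "z \<in> cyl M n F x"
      then have zt: "z \<in> tuples M n" and zx: "\<And>k i. k < n \<Longrightarrow> i \<in> F \<Longrightarrow> z k i = x k i" unfolding cyl_def by auto
      have "F \<subseteq> cset T (emb z) \<beta>0 c"
      proof
        fix i assume i: "i \<in> F"
        have e: "(\<lambda>v. emb z v i) = (\<lambda>v. emb x v i)" using loc[OF zt xt] zx i by blast
        have "i \<in> cset T (emb x) \<beta>0 c" using F(1) i by blast
        then show "i \<in> cset T (emb z) \<beta>0 c" unfolding cset_def by (simp add: e)
      qed
      then have "card F \<le> cnt z c" unfolding cnt_def using tr_ge_sub[of F _ K] F(2,3) jK by blast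
      then show "z \<in> G c j" using zt F(3) unfolding G_def by simp
    qed
    then show "\<exists>T. openin (tuple_top M n) T \<and> x \<in> T \<and> T \<subseteq> G c j"
      using cyl_open[OF F(2) xt] cyl_center[OF xt] by blast
  qed
  define vec where "vec x = restrict (cnt x) Rg" for x
  define S where "S = {x \<in> tuples M n. Q (emb x) \<beta>0}"
  define W where "W = vec ` S"
  have "W \<subseteq> Pi\<^sub>E Rg (\<lambda>_. {..K})"
    unfolding W_def vec_def cnt_def using tr_le by auto
  then have Wfin: "finite W" using T(1) unfolding Rg_def by (meson finite_PiE finite_atMost finite_subset)
  define U where "U w = topspace (tuple_top M n) \<inter> (\<Inter>c\<in>Rg. G c (w c))" for w
  define Fc where "Fc w = topspace (tuple_top M n) - (\<Union>c\<in>Rg. G c (Suc (w c)))" for w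
  define L where "L = (\<lambda>w. (U w, Fc w)) ` W"
  have Uo: "openin (tuple_top M n) (U w)" for w
    unfolding U_def by (rule open_inter_fin) (use T(1) Gopen in \<open>auto simp: Rg_def\<close>)
  have Fcc: "closedin (tuple_top M n) (Fc w)" for w
    unfolding Fc_def by (intro closedin_diff closedin_topspace openin_Union) (auto simp: Gopen)
  have memb: "x \<in> U w \<inter> Fc w \<longleftrightarrow> x \<in> tuples M n \<and> (\<forall>c\<in>Rg. cnt x c = w c)" for x w
    unfolding U_def Fc_def G_def top_tuple by (auto simp: not_less_eq_eq intro: order.antisym)
  have "S = (\<Union>w\<in>W. U w \<inter> Fc w)"
  proof
    show "S \<subseteq> (\<Union>w\<in>W. U w \<inter> Fc w)"
    proof
      fix x assume x: "x \<in> S"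
      then have "x \<in> U (vec x) \<inter> Fc (vec x)" unfolding memb vec_def S_def by auto
      then show "x \<in> (\<Union>w\<in>W. U w \<inter> Fc w)" using x unfolding W_def by blast
    qed
  next
    show "(\<Union>w\<in>W. U w \<inter> Fc w) \<subseteq> S"
    proof
      fix x assume "x \<in> (\<Union>w\<in>W. U w \<inter> Fc w)"
      then obtain y where y: "y \<in> S" "x \<in> U (vec y) \<inter> Fc (vec y)" unfolding W_def by blast
      then have xt: "x \<in> tuples M n" and eq: "\<forall>c\<in>Rg. cnt x c = cnt y c" unfolding memb vec_def by auto
      have "sameK T K (emb y) \<beta>0 (emb x) \<beta>0"
        unfolding sameK_def
      proof
        fix c
        show "tr K (cset T (emb y) \<beta>0 c) = tr K (cset T (emb x) \<beta>0 c)"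
        proof (cases "c \<in> Rg")
          case True then show ?thesis using eq unfolding cnt_def by simp
        next
          case False then show ?thesis unfolding Rg_def by (simp add: cset_out)
        qed
      qed
      then have "Q (emb x) \<beta>0" using T(2) y(1) unfolding S_def by blast
      then show "x \<in> S" using xt unfolding S_def by simp
    qed
  qed
  then have "{x \<in> tuples M n. Q (emb x) \<beta>0} = (\<Union>p\<in>L. fst p \<inter> snd p)" unfolding S_def L_def by simp
  moreover have "finite L" unfolding L_def using Wfin by simp
  moreover have "\<forall>p\<in>L. openin (tuple_top M n) (fst p) \<and> closedin (tuple_top M n) (snd p)"
    unfolding L_def using Uo Fcc by auto
  ultimately show ?thesis unfolding lcu_def by blast
qed




lemma tern_gt:
  fixes p q :: "nat \<Rightarrow> bool"
  assumes eqm: "\<forall>k<m. p k = q k" and pm: "p m" and qm: "\<not> q m"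
  shows "(\<Sum>k. if q k then (1/3::real)^k else 0) < (\<Sum>k. if p k then (1/3::real)^k else 0)"
proof -
  define a where "a k = (if p k then (1/3::real)^k else 0)" for k
  define b where "b k = (if q k then (1/3::real)^k else 0)" for k
  define d where "d k = a k - b k" for k
  have g: "summable (\<lambda>k. (1/3::real)^k)" by (rule summable_geometric) simp
  have sa: "summable a" by (rule summable_comparison_test'[OF g, of 0]) (simp add: a_def)
  have sb: "summable b" by (rule summable_comparison_test'[OF g, of 0]) (simp add: b_def)
  have sd: "summable d" unfolding d_def using sa sb by (rule summable_diff)
  have "suminf a - suminf b = suminf d" unfolding d_def using suminf_diff[OF sa sb] by simp
  also have "suminf d = (\<Sum>k. d (k + Suc m)) + (\<Sum>i<Suc m. d i)" by (rule suminf_split_initial_segment[OF sd])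
  also have "(\<Sum>i<Suc m. d i) = (1/3)^m"
  proof -
    have "(\<Sum>i<m. d i) = 0" by (intro sum.neutral) (auto simp: d_def a_def b_def eqm)
    then show ?thesis using pm qm by (simp add: d_def a_def b_def)
  qed
  also have "(\<Sum>k. d (k + Suc m)) \<ge> - (\<Sum>k. (1/3::real)^(k + Suc m))"
  proof -
    have g2: "summable (\<lambda>k. (1/3::real)^(k + Suc m))" using summable_ignore_initial_segment[OF g] by simp
    have sd2: "summable (\<lambda>k. d (k + Suc m))" by (rule summable_ignore_initial_segment[OF sd])
    have g2m: "summable (\<lambda>k. - ((1/3::real)^(k + Suc m)))" by (rule summable_minus[OF g2])
    have "(\<Sum>k. - ((1/3::real)^(k + Suc m))) \<le> (\<Sum>k. d (k + Suc m))"
      by (rule suminf_le[OF _ g2m sd2]) (simp add: d_def a_def b_def)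
    then show ?thesis using suminf_minus[OF g2] by simp
  qed
  moreover have "(\<Sum>k. (1/3::real)^(k + Suc m)) = (1/3)^m / 2"
  proof -
    have "(\<Sum>k. (1/3::real)^(k + Suc m)) = (\<Sum>k. (1/3)^(Suc m) * (1/3)^k)" by (simp add: power_add mult.commute)
    also have "\<dots> = (1/3)^(Suc m) * (\<Sum>k. (1/3::real)^k)" by (rule suminf_mult[OF g])
    also have "(\<Sum>k. (1/3::real)^k) = 3/2" by (subst suminf_geometric) simp_all
    finally show ?thesis by simp
  qed
  ultimately have "suminf a - suminf b \<ge> (1/3)^m - (1/3)^m / 2" by linarith
  moreover have "(1/3::real)^m > 0" by simp
  ultimately show ?thesis unfolding a_def b_def by linarith
qed

lemma tern_inj:
  fixes p q :: "nat \<Rightarrow> bool"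
  assumes eq: "(\<Sum>k. if p k then (1/3::real)^k else 0) = (\<Sum>k. if q k then (1/3::real)^k else 0)"
  shows "p = q"
proof (rule ccontr)
  assume "p \<noteq> q"
  then have ex: "\<exists>k. p k \<noteq> q k" by (auto simp: fun_eq_iff)
  define m where "m = (LEAST k. p k \<noteq> q k)"
  have m: "p m \<noteq> q m" unfolding m_def by (rule LeastI_ex[OF ex])
  have lt: "\<forall>k<m. p k = q k" unfolding m_def using not_less_Least by blast
  show False
  proof (cases "p m")
    case True
    then show False using tern_gt[of m p q] lt m eq by auto
  next
    case False
    then show False using tern_gt[of m q p] lt m eq by auto
  qed
qed

lemma borel_of_euclidean: "borel_of (euclidean :: real topology) = borel"
  unfolding borel_of_def borel_def by (simp add: open_openin)

lemma Polish_real: "Polish_space (euclidean :: real topology)"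
  unfolding Polish_space_def separable_space_def
proof
  show "completely_metrizable_space (euclidean :: real topology)" by (rule completely_metrizable_space_euclidean)
  show "\<exists>C. countable C \<and> C \<subseteq> topspace (euclidean :: real topology) \<and> euclidean closure_of C = topspace euclidean"
    by (rule exI[of _ \<rat>]) (simp add: countable_rat Rats_closure_real)
qed




definition joinT :: "nat \<Rightarrow> (nat \<Rightarrow> 'x) \<Rightarrow> (nat \<Rightarrow> 'x) \<Rightarrow> nat \<Rightarrow> 'x" where
  "joinT n x z = (\<lambda>k. if k < n then x k else z (k - n))"

definition cylg where "cylg M n F g = {z \<in> tuples M n. \<forall>k<n. \<forall>i\<in>F. z k i = g (k, i)}"

definition Cyls where
  "Cyls M n = (\<Union>F\<in>{F. finite F}. cylg M n F ` Pi\<^sub>E ({..<n} \<times> F) (\<lambda>p. dom (M (snd p))))"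

lemma Cyls_countable:
  fixes M :: "'i::countable \<Rightarrow> ('f, 'r, 'a) lstruct"
  assumes "\<And>i. countable (dom (M i))"
  shows "countable (Cyls M n)"
  unfolding Cyls_def
  by (intro countable_UN countable_Collect_finite countable_image countable_PiE) (auto simp: assms)

lemma cyl_in_Cyls: "finite F \<Longrightarrow> x \<in> tuples M n \<Longrightarrow> cyl M n F x \<in> Cyls M n"
proof -
  assume F: "finite F" and x: "x \<in> tuples M n"
  define g where "g = restrict (\<lambda>p. x (fst p) (snd p)) ({..<n} \<times> F)"
  have g: "g \<in> Pi\<^sub>E ({..<n} \<times> F) (\<lambda>p. dom (M (snd p)))" unfolding g_def using tuples_mem[OF x] by auto
  have "cyl M n F x = cylg M n F g" unfolding cyl_def cylg_def g_def by auto
  then show ?thesis unfolding Cyls_def using F g by blast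
qed

lemma Cyls_ne: "Cyls M n \<noteq> {}"
proof -
  have "(\<lambda>_. undefined) \<in> Pi\<^sub>E ({..<n} \<times> {}) (\<lambda>p. dom (M (snd p)))" by simp
  then show ?thesis unfolding Cyls_def by blast
qed

lemma Cyls_sub: "C \<in> Cyls M n \<Longrightarrow> C \<subseteq> tuples M n"
  unfolding Cyls_def cylg_def by auto

lemma join_loc:
  assumes "x \<in> tuples M n" "y \<in> tuples M n" "\<forall>k<n. x k i = y k i"
  shows "(\<lambda>v. joinT n z x v i) = (\<lambda>v. joinT n z y v i)"
proof
  fix v show "joinT n z x v i = joinT n z y v i"
    using assms tuples_undef[OF assms(1), of "v - n"] tuples_undef[OF assms(2), of "v - n"]
    unfolding joinT_def by (cases "v - n < n") auto
qed

lemma cls_lcu: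
  "lcu (tuple_top M n) {z \<in> tuples M n. fvsat M (joinT n x z) (\<lambda>_. {}) \<psi>}"
  by (rule det_lcu[where Q="\<lambda>\<sigma> \<beta>. fvsat M \<sigma> \<beta> \<psi>" and emb="joinT n x", OF det_fvsat])
    (rule join_loc)

lemma Sat_lcu:
  assumes C: "C \<in> Cyls M n"
  shows "lcu (tuple_top M n) {x \<in> tuples M n. \<exists>z\<in>C. fvsat M (joinT n x z) (\<lambda>_. {}) \<psi>}"
proof -
  obtain F g where F: "finite F" and Ceq: "C = cylg M n F g" using C unfolding Cyls_def by blast
  define G where "G v i \<rho> = (if v < n then \<rho> v else if v < 2*n then \<rho> (v + n) else undefined i)"
    for v and i :: 'a and \<rho> :: "nat \<Rightarrow> 'b"
  define Q1 where "Q1 \<sigma> \<beta> = ((\<forall>i. (\<lambda>\<rho> w. w 0 \<longrightarrow> (\<forall>k<n. \<rho> (2*n+k) = \<rho> (n+k))) (\<lambda>v. \<sigma> v i) (\<lambda>b. i \<in> \<beta> b))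
       \<and> fvsat M (\<lambda>v i. G v i (\<lambda>w. \<sigma> w i)) (\<lambda>b. {i. False}) \<psi>)" for \<sigma> and \<beta> :: "nat \<Rightarrow> 'a set"
  have d1: "det (\<lambda>\<sigma> \<beta>. \<forall>i. (\<lambda>\<rho> w. w 0 \<longrightarrow> (\<forall>k<n. \<rho> (2*n+k) = \<rho> (n+k))) (\<lambda>v. \<sigma> v i) (\<lambda>b. i \<in> \<beta> b))"
    by (rule det_atom)
  have d2: "det (\<lambda>\<sigma> \<beta>. fvsat M (\<lambda>v i. G v i (\<lambda>w. \<sigma> w i)) (\<lambda>b. {i. (\<lambda>b i w. False) b i (\<lambda>c. i \<in> \<beta> c)}) \<psi>)"
    by (rule det_subst[OF det_fvsat])
  have d3: "det Q1" unfolding Q1_def using det_conj[OF d1 d2] by simp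
  define Qx where "Qx \<sigma> \<beta> = (\<exists>z\<in>Pi\<^sub>E {..<n} (\<lambda>_. prod_carrier M). Q1 (shift (2*n) n \<sigma> z) \<beta>)" for \<sigma> \<beta>
  have d4: "det Qx" unfolding Qx_def by (rule det_ex_tuple[OF d3])
  define embS where "embS x = (\<lambda>v. if v < n then x v else if v < 2*n then (\<lambda>i. if i \<in> F then g (v - n, i) else undefined) else undefined)"
    for x :: "nat \<Rightarrow> 'a \<Rightarrow> 'b"
  have L: "lcu (tuple_top M n) {x \<in> tuples M n. Qx (embS x) (\<lambda>_. F)}"
  proof (rule det_lcu[OF d4])
    fix x y :: "nat \<Rightarrow> 'a \<Rightarrow> 'b" and i assume "\<forall>k<n. x k i = y k i"
    then show "(\<lambda>v. embS x v i) = (\<lambda>v. embS y v i)" unfolding embS_def by auto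
  qed
  have eq: "Qx (embS x) (\<lambda>_. F) \<longleftrightarrow> (\<exists>z\<in>C. fvsat M (joinT n x z) (\<lambda>_. {}) \<psi>)" if x: "x \<in> tuples M n" for x
  proof -
    have pt: "Pi\<^sub>E {..<n} (\<lambda>_. prod_carrier M) = tuples M n" unfolding tuples_def by simp
    have "Q1 (shift (2*n) n (embS x) z) (\<lambda>_. F) \<longleftrightarrow> z \<in> C \<and> fvsat M (joinT n x z) (\<lambda>_. {}) \<psi>"
      if z: "z \<in> tuples M n" for z
    proof -
      define \<sigma>' where "\<sigma>' = shift (2*n) n (embS x) z"
      have s1: "\<sigma>' (2*n+k) = z k" if "k < n" for k unfolding \<sigma>'_def shift_def using that by simp
      have s2: "\<sigma>' (n+k) = (\<lambda>i. if i \<in> F then g (k, i) else undefined)" if "k < n" for k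
        unfolding \<sigma>'_def shift_def embS_def using that by (auto simp: add_diff_cancel_left')
      have c1: "(\<forall>i. (\<lambda>\<rho> w. w 0 \<longrightarrow> (\<forall>k<n. \<rho> (2*n+k) = \<rho> (n+k))) (\<lambda>v. \<sigma>' v i) (\<lambda>b. i \<in> F))
                 \<longleftrightarrow> z \<in> C"
        unfolding Ceq cylg_def using z s1 s2 by auto
      have c2: "(\<lambda>v i. G v i (\<lambda>w. \<sigma>' w i)) = joinT n x z"
      proof (intro ext)
        fix v i
        show "G v i (\<lambda>w. \<sigma>' w i) = joinT n x z v i"
        proof (cases "v < n")
          case True then show ?thesis unfolding G_def joinT_def \<sigma>'_def shift_def embS_def by simp
        next
          case False
          show ?thesis
          proof (cases "v < 2*n")
            case True
            then have "\<sigma>' (v + n) = z (v - n)" unfolding \<sigma>'_def shift_def using False by simp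
            then show ?thesis unfolding G_def joinT_def using False True by simp
          next
            case False2: False
            have "z (v - n) = undefined" using tuples_undef[OF z] False2 by simp
            then show ?thesis unfolding G_def joinT_def using False False2 by simp
          qed
        qed
      qed
      have c3: "(\<lambda>b::nat. {i. False}) = (\<lambda>_. {})" by simp
      show ?thesis unfolding Q1_def \<sigma>'_def[symmetric] c1 c2 c3 ..
    qed
    then show ?thesis unfolding Qx_def pt using Cyls_sub[OF C] by blast
  qed
  have "{x \<in> tuples M n. Qx (embS x) (\<lambda>_. F)} = {x \<in> tuples M n. \<exists>z\<in>C. fvsat M (joinT n x z) (\<lambda>_. {}) \<psi>}"
    using eq by blast
  then show ?thesis using L by simp
qed




theorem mainTheorem20:
  fixes M :: "'i::countable \<Rightarrow> ('f, 'r, 'a) lstruct"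
    and n :: nat
    and E :: "((nat \<Rightarrow> 'i \<Rightarrow> 'a) \<times> (nat \<Rightarrow> 'i \<Rightarrow> 'a)) set"
  assumes "\<And>i. is_lstruct (M i)"
    and "\<And>i. countable (dom (M i))"
    and "FV_definable_rel M n E"
    and "equiv (tuples M n) E"
  shows "smooth_rel (tuple_top M n) E"
proof -
  obtain \<psi> where \<psi>: "E = defined_rel M n \<psi>" using assms(3) unfolding FV_definable_rel_def by blast
  have Erel: "(x, z) \<in> E \<longleftrightarrow> x \<in> tuples M n \<and> z \<in> tuples M n \<and> fvsat M (joinT n x z) (\<lambda>_. {}) \<psi>" for x z
    unfolding \<psi> defined_rel_def joinT_def by simp
  have Erefl: "x \<in> tuples M n \<Longrightarrow> (x, x) \<in> E" for x using assms(4) unfolding equiv_def refl_on_def by blast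
  have Esym: "(x, y) \<in> E \<Longrightarrow> (y, x) \<in> E" for x y using assms(4) unfolding equiv_def sym_def by blast
  have Etrans: "(x, y) \<in> E \<Longrightarrow> (y, z) \<in> E \<Longrightarrow> (x, z) \<in> E" for x y z
    using assms(4) unfolding equiv_def trans_def by blast
  define X where "X = tuple_top M n"
  have topX: "topspace X = tuples M n" unfolding X_def by (rule top_tuple)
  define Sat where "Sat C = {x \<in> tuples M n. \<exists>z\<in>C. (x, z) \<in> E}" for C
  have Sat_borel: "Sat C \<in> sets (borel_of X)" if C: "C \<in> Cyls M n" for C
  proof -
    have "Sat C = {x \<in> tuples M n. \<exists>z\<in>C. fvsat M (joinT n x z) (\<lambda>_. {}) \<psi>}"
      unfolding Sat_def Erel using Cyls_sub[OF C] by blast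
    then show ?thesis unfolding X_def using lcu_borel[OF Sat_lcu[OF C]] by simp
  qed
  define cls where "cls x = {z \<in> tuples M n. (x, z) \<in> E}" for x
  have cls_l: "lcu X (cls x)" if "x \<in> tuples M n" for x
  proof -
    have "cls x = {z \<in> tuples M n. fvsat M (joinT n x z) (\<lambda>_. {}) \<psi>}"
      unfolding cls_def Erel using that by blast
    then show ?thesis unfolding X_def using cls_lcu by simp
  qed
  define Cn where "Cn k = from_nat_into (Cyls M n) k" for k
  have Cn_in: "Cn k \<in> Cyls M n" for k unfolding Cn_def by (rule from_nat_into[OF Cyls_ne])
  define \<theta> where "\<theta> x = (\<Sum>k. if x \<in> Sat (Cn k) then (1/3::real)^k else 0)" for x
  have meas: "\<theta> \<in> borel_of X \<rightarrow>\<^sub>M borel_of euclidean"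
    unfolding borel_of_euclidean \<theta>_def
  proof (rule borel_measurable_suminf)
    fix k
    show "(\<lambda>x. if x \<in> Sat (Cn k) then (1/3::real)^k else 0) \<in> borel_measurable (borel_of X)"
    proof (rule measurable_If_set)
      show "Sat (Cn k) \<inter> space (borel_of X) \<in> sets (borel_of X)"
      proof -
        have "Sat (Cn k) \<subseteq> topspace X" unfolding Sat_def topX by auto
        then have "Sat (Cn k) \<inter> space (borel_of X) = Sat (Cn k)" by (auto simp: space_borel_of)
        then show ?thesis using Sat_borel[OF Cn_in[of k]] by simp
      qed
    qed simp_all
  qed
  have sep: "\<exists>C\<in>Cyls M n. a \<in> Sat C \<and> b \<notin> Sat C"
    if a: "a \<in> tuples M n" and b: "b \<in> tuples M n" and za: "z \<in> X closure_of cls a" and zb: "z \<notin> X closure_of cls b"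
    for a b z
  proof -
    have zt: "z \<in> tuples M n" using za topX unfolding in_closure_of by blast
    then obtain T where T: "z \<in> T" "openin X T" "\<And>w. w \<in> cls b \<Longrightarrow> w \<notin> T"
      using zb topX unfolding in_closure_of by blast
    obtain F where F: "finite F" "cyl M n F z \<subseteq> T" using cyl_base[OF T(2)[unfolded X_def] T(1)] by blast
    define C where "C = cyl M n F z"
    have C: "C \<in> Cyls M n" unfolding C_def by (rule cyl_in_Cyls[OF F(1) zt])
    have "openin X C" unfolding C_def X_def by (rule cyl_open[OF F(1) zt])
    moreover have "z \<in> C" unfolding C_def by (rule cyl_center[OF zt])
    ultimately obtain w where w: "w \<in> cls a" "w \<in> C" using za unfolding in_closure_of by blast
    have "a \<in> Sat C" using w a unfolding Sat_def cls_def by blast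
    moreover have "b \<notin> Sat C"
    proof
      assume "b \<in> Sat C"
      then obtain w' where w': "w' \<in> C" "(b, w') \<in> E" unfolding Sat_def by blast
      then have "w' \<in> cls b" unfolding cls_def using Erel by blast
      then show False using T(3) F(2) w'(1) unfolding C_def by blast
    qed
    ultimately show ?thesis using C by blast
  qed
  have key: "(x, y) \<in> E \<longleftrightarrow> \<theta> x = \<theta> y" if x: "x \<in> tuples M n" and y: "y \<in> tuples M n" for x y
  proof
    assume xy: "(x, y) \<in> E"
    have "x \<in> Sat C \<longleftrightarrow> y \<in> Sat C" for C
      unfolding Sat_def using x y xy Esym Etrans by blast
    then show "\<theta> x = \<theta> y" unfolding \<theta>_def by simp
  next
    assume "\<theta> x = \<theta> y"
    then have "(\<lambda>k. x \<in> Sat (Cn k)) = (\<lambda>k. y \<in> Sat (Cn k))" unfolding \<theta>_def by (rule tern_inj)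
    then have eqS: "x \<in> Sat C \<longleftrightarrow> y \<in> Sat C" if "C \<in> Cyls M n" for C
      using from_nat_into_surj[OF Cyls_countable[OF assms(2)] that] unfolding Cn_def by (metis)
    show "(x, y) \<in> E"
    proof (rule ccontr)
      assume nxy: "(x, y) \<notin> E"
      have disj: "cls x \<inter> cls y = {}"
      proof (rule ccontr)
        assume "cls x \<inter> cls y \<noteq> {}"
        then obtain z where "(x, z) \<in> E" "(y, z) \<in> E" unfolding cls_def by blast
        then show False using nxy Esym Etrans by blast
      qed
      have ne: "cls x \<noteq> {}" using Erefl[OF x] x unfolding cls_def by blast
      have sub: "cls x \<subseteq> topspace X" "cls y \<subseteq> topspace X" unfolding cls_def topX by auto
      have "X closure_of cls x \<noteq> X closure_of cls y"
        using lcu_closure_meet[OF cls_l[OF x] cls_l[OF y] ne sub] disj by blast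
      then obtain z where "(z \<in> X closure_of cls x \<and> z \<notin> X closure_of cls y) \<or> (z \<in> X closure_of cls y \<and> z \<notin> X closure_of cls x)"
        by blast
      then show False
      proof
        assume "z \<in> X closure_of cls x \<and> z \<notin> X closure_of cls y"
        then obtain C where "C \<in> Cyls M n" "x \<in> Sat C" "y \<notin> Sat C" using sep[OF x y] by blast
        then show False using eqS by blast
      next
        assume "z \<in> X closure_of cls y \<and> z \<notin> X closure_of cls x"
        then obtain C where "C \<in> Cyls M n" "y \<in> Sat C" "x \<notin> Sat C" using sep[OF y x] by blast
        then show False using eqS by blast
      qed
    qed
  qed
  show ?thesis unfolding smooth_rel_def
  proof (intro exI conjI)
    show "Polish_space (euclidean :: real topology)" by (rule Polish_real)
    show "\<theta> \<in> borel_of (tuple_top M n) \<rightarrow>\<^sub>M borel_of euclidean" using meas unfolding X_def .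
    show "\<forall>x\<in>topspace (tuple_top M n). \<forall>y\<in>topspace (tuple_top M n). ((x, y) \<in> E) = (\<theta> x = \<theta> y)"
      using key top_tuple by blast
  qed
qed



end
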